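(* Let $\{X_{n}, \, n \geqslant 1 \}$ be a sequence of identically distributed and pairwise positively quadrant dependent random variables satisfying \[ \sum_{1 \leqslant k < j < \infty} \frac{G_{X_{k},X_{j}}(k,j)}{kj} < \infty . \] Then $\mathbb{E} \lvert X_{1} \rvert < \infty$ if and only if $\frac{1}{n}\sum_{k=1}^{n} (X_{k} - \mathbb{E} \, X_{1}) \to 0$ almost surely.
   Context: A sequence $\{X_{n}, \, n \geqslant 1 \}$ of random variables is pairwise positively quadrant dependent (pairwise PQD) if $\mathbb{P}\{X_{k} \leqslant x_{k}, X_{j} \leqslant x_{j}\} - \mathbb{P}\{X_{k} \leqslant x_{k}\}\mathbb{P}\{X_{j} \leqslant x_{j}\} \geqslant 0$ for all reals $x_{k}, x_{j}$ and all positive integers $k \neq j$. For random variables $X_k, X_j$ and $u,v>0$, \[ G_{X_{k},X_{j}}(u,v) := \int_{-v}^{v} \int_{-u}^{u} \big[\mathbb{P} \{X_{k} > x, X_{j} > y \} - \mathbb{P} \{X_{k} > x \} \mathbb{P} \{X_{j} > y \}\big] \, \mathrm{d}x \, \mathrm{d}y . \] *)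

theory Defs
  imports "HOL-Probability.Probability"
begin

definition pairwise_PQD :: "'a measure \<Rightarrow> (nat \<Rightarrow> 'a \<Rightarrow> real) \<Rightarrow> bool" where
  "pairwise_PQD M X \<longleftrightarrow>
     (\<forall>k j x y. 1 \<le> k \<and> 1 \<le> j \<and> k \<noteq> j \<longrightarrow>
        measure M {\<omega> \<in> space M. X k \<omega> \<le> x \<and> X j \<omega> \<le> y}
          - measure M {\<omega> \<in> space M. X k \<omega> \<le> x} * measure M {\<omega> \<in> space M. X j \<omega> \<le> y} \<ge> 0)"

definition G :: "'a measure \<Rightarrow> ('a \<Rightarrow> real) \<Rightarrow> ('a \<Rightarrow> real) \<Rightarrow> real \<Rightarrow> real \<Rightarrow> real" where
  "G M Y Z u v =
     (LBINT y=-v..v. (LBINT x=-u..u.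
        measure M {\<omega> \<in> space M. Y \<omega> > x \<and> Z \<omega> > y}
        - measure M {\<omega> \<in> space M. Y \<omega> > x} * measure M {\<omega> \<in> space M. Z \<omega> > y}))"

end

theory Submission
  imports Defs
begin

definition ramp :: "real \<Rightarrow> real \<Rightarrow> real \<Rightarrow> real" where
  "ramp a b x = max a (min b x) - a"

lemma pred_lessThan_measurable[measurable (raw)]:
  fixes f g :: "'a \<Rightarrow> real"
  shows "f \<in> borel_measurable N \<Longrightarrow> g \<in> borel_measurable N \<Longrightarrow> Measurable.pred N (\<lambda>x. f x \<in> {..<g x})"
  unfolding lessThan_iff by measurable

lemma ramp_nn:
  assumes "a \<le> b"
  shows "ennreal (ramp a b x) = (\<integral>\<^sup>+t. indicator {a..b} t * indicator {..<x} t \<partial>lborel)"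
proof -
  have "(\<integral>\<^sup>+t. indicator {a..b} t * indicator {..<x} t \<partial>lborel) = emeasure lborel ({a..b} \<inter> {..<x})"
  proof -
    have "(\<lambda>t. indicator {a..b} t * indicator {..<x} t :: ennreal) = indicator ({a..b} \<inter> {..<x})"
      by (auto simp: indicator_def fun_eq_iff)
    then show ?thesis by simp
  qed
  also have "\<dots> = ennreal (ramp a b x)"
  proof (cases "x \<le> a")
    case True
    then have "{a..b} \<inter> {..<x} = {}" by auto
    then show ?thesis using True by (simp add: ramp_def)
  next
    case False
    show ?thesis
    proof (cases "x \<le> b")
      case True
      then have "{a..b} \<inter> {..<x} = {a..<x}" by auto
      then show ?thesis using True False by (simp add: ramp_def)
    next
      case F2: False
      then have "{a..b} \<inter> {..<x} = {a..b}" by auto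
      then show ?thesis using F2 False assms by (simp add: ramp_def)
    qed
  qed
  finally show ?thesis ..
qed

lemma ramp_bounds: "a \<le> b \<Longrightarrow> 0 \<le> ramp a b x \<and> ramp a b x \<le> b - a"
  by (auto simp: ramp_def)

lemma ramp_measurable[measurable]: "ramp a b \<in> borel_measurable borel"
  unfolding ramp_def by measurable

context prob_space begin

lemma pair_lborel: "pair_sigma_finite M lborel"
  by (intro pair_sigma_finite.intro sigma_finite_measure_axioms lborel.sigma_finite_measure_axioms)

lemma pair_lborel': "pair_sigma_finite lborel M"
  by (intro pair_sigma_finite.intro sigma_finite_measure_axioms lborel.sigma_finite_measure_axioms)

lemma integrable_bounded_rv:
  fixes f :: "'a \<Rightarrow> real"
  assumes [measurable]: "f \<in> borel_measurable M" and "\<And>x. x \<in> space M \<Longrightarrow> \<bar>f x\<bar> \<le> B"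
  shows "integrable M f"
  by (rule integrable_const_bound[where B=B]) (use assms in auto)

lemma ramp_expect:
  assumes [measurable]: "X \<in> borel_measurable M" and ab: "a \<le> b"
  shows "expectation (\<lambda>\<omega>. ramp a b (X \<omega>)) = (LBINT s:{a..b}. prob {\<omega>\<in>space M. s < X \<omega>})"
proof -
  interpret PS: pair_sigma_finite M lborel by (rule pair_lborel)
  have int1: "integrable M (\<lambda>\<omega>. ramp a b (X \<omega>))"
    by (rule integrable_bounded_rv[where B="b-a"]) (use ramp_bounds[OF ab] in auto)
  have mp: "(\<lambda>s. prob {\<omega>\<in>space M. s < X \<omega>}) \<in> borel_measurable lborel"
    by measurable
  have int2: "integrable lborel (\<lambda>s. indicator {a..b} s * prob {\<omega>\<in>space M. s < X \<omega>})"
    using integrableI_bounded_set_indicator[of "{a..b}" lborel "\<lambda>s. prob {\<omega>\<in>space M. s < X \<omega>}" 1] mp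
    by (auto simp: emeasure_lborel_Icc_eq)
  have "ennreal (expectation (\<lambda>\<omega>. ramp a b (X \<omega>))) = (\<integral>\<^sup>+\<omega>. ennreal (ramp a b (X \<omega>)) \<partial>M)"
    by (rule nn_integral_eq_integral[symmetric]) (use int1 ramp_bounds[OF ab] in auto)
  also have "\<dots> = (\<integral>\<^sup>+\<omega>. (\<integral>\<^sup>+s. indicator {a..b} s * indicator {..<X \<omega>} s \<partial>lborel) \<partial>M)"
    using ramp_nn[OF ab] by simp
  also have "\<dots> = (\<integral>\<^sup>+s. (\<integral>\<^sup>+\<omega>. indicator {a..b} s * indicator {..<X \<omega>} s \<partial>M) \<partial>lborel)"
    by (rule PS.Fubini'[symmetric]) measurable
  also have "\<dots> = (\<integral>\<^sup>+s. ennreal (indicator {a..b} s * prob {\<omega>\<in>space M. s < X \<omega>}) \<partial>lborel)"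
  proof (rule nn_integral_cong)
    fix s :: real
    have "(\<integral>\<^sup>+\<omega>. indicator {a..b} s * indicator {..<X \<omega>} s \<partial>M)
        = (\<integral>\<^sup>+\<omega>. indicator {a..b} s * indicator {\<omega>\<in>space M. s < X \<omega>} \<omega> \<partial>M)"
      by (rule nn_integral_cong) (auto simp: indicator_def)
    also have "\<dots> = indicator {a..b} s * emeasure M {\<omega>\<in>space M. s < X \<omega>}"
      by (subst nn_integral_cmult) auto
    also have "\<dots> = ennreal (indicator {a..b} s * prob {\<omega>\<in>space M. s < X \<omega>})"
      by (simp add: emeasure_eq_measure indicator_def)
    finally show "(\<integral>\<^sup>+\<omega>. indicator {a..b} s * indicator {..<X \<omega>} s \<partial>M) = ennreal (indicator {a..b} s * prob {\<omega>\<in>space M. s < X \<omega>})" .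
  qed
  also have "\<dots> = ennreal (LBINT s:{a..b}. prob {\<omega>\<in>space M. s < X \<omega>})"
    by (subst nn_integral_eq_integral) (use int2 in \<open>auto simp: set_lebesgue_integral_def\<close>)
  finally have "ennreal (expectation (\<lambda>\<omega>. ramp a b (X \<omega>))) = ennreal (LBINT s:{a..b}. prob {\<omega>\<in>space M. s < X \<omega>})" .
  moreover have "0 \<le> expectation (\<lambda>\<omega>. ramp a b (X \<omega>))"
    by (rule integral_nonneg_AE) (use ramp_bounds[OF ab] in auto)
  moreover have "0 \<le> (LBINT s:{a..b}. prob {\<omega>\<in>space M. s < X \<omega>})"
    unfolding set_lebesgue_integral_def by (rule integral_nonneg_AE) (auto simp: indicator_def)
  ultimately show ?thesis by simp
qed

lemma ramp_expect2:
  assumes [measurable]: "X \<in> borel_measurable M" "Y \<in> borel_measurable M"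
    and ab1: "a1 \<le> b1" and ab2: "a2 \<le> b2"
  shows "expectation (\<lambda>\<omega>. ramp a1 b1 (X \<omega>) * ramp a2 b2 (Y \<omega>)) =
    (LBINT t:{a2..b2}. LBINT s:{a1..b1}. prob {\<omega>\<in>space M. s < X \<omega> \<and> t < Y \<omega>})"
proof -
  interpret PS: pair_sigma_finite M lborel by (rule pair_lborel)
  let ?p = "\<lambda>s t. prob {\<omega>\<in>space M. s < X \<omega> \<and> t < Y \<omega>}"
  have int1: "integrable M (\<lambda>\<omega>. ramp a1 b1 (X \<omega>) * ramp a2 b2 (Y \<omega>))"
    by (rule integrable_bounded_rv[where B="(b1-a1)*(b2-a2)"])
       (use ramp_bounds[OF ab1] ramp_bounds[OF ab2] ab1 ab2 in \<open>auto intro!: mult_mono simp: abs_mult\<close>)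
  have mp[measurable]: "(\<lambda>(t, s). ?p s t) \<in> borel_measurable (lborel \<Otimes>\<^sub>M lborel)"
    by measurable
  have mp1: "(\<lambda>s. ?p s t) \<in> borel_measurable lborel" for t
    by measurable
  have int2: "integrable lborel (\<lambda>s. indicator {a1..b1} s * ?p s t)" for t
    using integrableI_bounded_set_indicator[of "{a1..b1}" lborel "\<lambda>s. ?p s t" 1] mp1
    by (auto simp: emeasure_lborel_Icc_eq)
  let ?q = "\<lambda>t. LBINT s:{a1..b1}. ?p s t"
  have mq: "?q \<in> borel_measurable lborel"
    unfolding set_lebesgue_integral_def by measurable
  have qb: "\<bar>?q t\<bar> \<le> b1 - a1" for t
  proof -
    have ii: "integrable lborel (\<lambda>x. indicator {a1..b1} x :: real)"
      by (simp add: integrable_indicator_iff emeasure_lborel_Icc_eq)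
    have "\<bar>?q t\<bar> \<le> (LBINT s:{a1..b1}. 1)"
      unfolding set_lebesgue_integral_def
      by (rule integral_abs_bound_integral) (use int2 ii in \<open>auto simp: indicator_def emeasure_lborel_Icc_eq\<close>)
    then show ?thesis using ab1 by (simp add: set_lebesgue_integral_def)
  qed
  have q0: "0 \<le> ?q t" for t
    unfolding set_lebesgue_integral_def by (rule integral_nonneg_AE) (auto simp: indicator_def)
  have int3: "integrable lborel (\<lambda>t. indicator {a2..b2} t * ?q t)"
    using integrableI_bounded_set_indicator[of "{a2..b2}" lborel "?q" "b1-a1"] mq qb
    by (auto simp: emeasure_lborel_Icc_eq)
  have "ennreal (expectation (\<lambda>\<omega>. ramp a1 b1 (X \<omega>) * ramp a2 b2 (Y \<omega>))) =
      (\<integral>\<^sup>+\<omega>. ennreal (ramp a1 b1 (X \<omega>) * ramp a2 b2 (Y \<omega>)) \<partial>M)"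
    by (rule nn_integral_eq_integral[symmetric]) (use int1 ramp_bounds[OF ab1] ramp_bounds[OF ab2] in auto)
  also have "\<dots> = (\<integral>\<^sup>+\<omega>. (\<integral>\<^sup>+s. indicator {a1..b1} s * indicator {..<X \<omega>} s \<partial>lborel) *
                     (\<integral>\<^sup>+t. indicator {a2..b2} t * indicator {..<Y \<omega>} t \<partial>lborel) \<partial>M)"
    using ramp_nn[OF ab1] ramp_nn[OF ab2] ramp_bounds[OF ab1] ramp_bounds[OF ab2]
    by (simp add: ennreal_mult)
  also have "\<dots> = (\<integral>\<^sup>+\<omega>. (\<integral>\<^sup>+t. (\<integral>\<^sup>+s. indicator {a1..b1} s * indicator {..<X \<omega>} s *
                     (indicator {a2..b2} t * indicator {..<Y \<omega>} t) \<partial>lborel) \<partial>lborel) \<partial>M)"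
    by (simp add: nn_integral_cmult nn_integral_multc)
  also have "\<dots> = (\<integral>\<^sup>+t. (\<integral>\<^sup>+\<omega>. (\<integral>\<^sup>+s. indicator {a1..b1} s * indicator {..<X \<omega>} s *
                     (indicator {a2..b2} t * indicator {..<Y \<omega>} t) \<partial>lborel) \<partial>M) \<partial>lborel)"
    by (rule PS.Fubini'[symmetric]) measurable
  also have "\<dots> = (\<integral>\<^sup>+t. (\<integral>\<^sup>+s. (\<integral>\<^sup>+\<omega>. indicator {a1..b1} s * indicator {..<X \<omega>} s *
                     (indicator {a2..b2} t * indicator {..<Y \<omega>} t) \<partial>M) \<partial>lborel) \<partial>lborel)"
    by (rule nn_integral_cong, rule PS.Fubini'[symmetric]) measurable
  also have "\<dots> = (\<integral>\<^sup>+t. (\<integral>\<^sup>+s. ennreal (indicator {a2..b2} t * (indicator {a1..b1} s * ?p s t)) \<partial>lborel) \<partial>lborel)"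
  proof (intro nn_integral_cong)
    fix s t :: real
    have "(\<integral>\<^sup>+\<omega>. indicator {a1..b1} s * indicator {..<X \<omega>} s * (indicator {a2..b2} t * indicator {..<Y \<omega>} t) \<partial>M)
        = (\<integral>\<^sup>+\<omega>. (indicator {a1..b1} s * indicator {a2..b2} t) * indicator {\<omega>\<in>space M. s < X \<omega> \<and> t < Y \<omega>} \<omega> \<partial>M)"
      by (rule nn_integral_cong) (auto simp: indicator_def)
    also have "\<dots> = (indicator {a1..b1} s * indicator {a2..b2} t) * emeasure M {\<omega>\<in>space M. s < X \<omega> \<and> t < Y \<omega>}"
      by (subst nn_integral_cmult) auto
    also have "\<dots> = ennreal (indicator {a2..b2} t * (indicator {a1..b1} s * ?p s t))"
      by (simp add: emeasure_eq_measure indicator_def)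
    finally show "(\<integral>\<^sup>+\<omega>. indicator {a1..b1} s * indicator {..<X \<omega>} s * (indicator {a2..b2} t * indicator {..<Y \<omega>} t) \<partial>M) = ennreal (indicator {a2..b2} t * (indicator {a1..b1} s * ?p s t))" .
  qed
  also have "\<dots> = (\<integral>\<^sup>+t. ennreal (indicator {a2..b2} t * ?q t) \<partial>lborel)"
  proof (rule nn_integral_cong)
    fix t :: real
    have "(\<integral>\<^sup>+s. ennreal (indicator {a2..b2} t * (indicator {a1..b1} s * ?p s t)) \<partial>lborel)
        = ennreal (\<integral>s. indicator {a2..b2} t * (indicator {a1..b1} s * ?p s t) \<partial>lborel)"
      by (rule nn_integral_eq_integral) (use int2 in \<open>auto simp: indicator_def\<close>)
    then show "(\<integral>\<^sup>+s. ennreal (indicator {a2..b2} t * (indicator {a1..b1} s * ?p s t)) \<partial>lborel) = ennreal (indicator {a2..b2} t * ?q t)"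
      by (simp add: set_lebesgue_integral_def)
  qed
  also have "\<dots> = ennreal (LBINT t:{a2..b2}. ?q t)"
    by (subst nn_integral_eq_integral) (use int3 q0 in \<open>auto simp: set_lebesgue_integral_def\<close>)
  finally have eq: "ennreal (expectation (\<lambda>\<omega>. ramp a1 b1 (X \<omega>) * ramp a2 b2 (Y \<omega>))) = ennreal (LBINT t:{a2..b2}. ?q t)" .
  moreover have "0 \<le> expectation (\<lambda>\<omega>. ramp a1 b1 (X \<omega>) * ramp a2 b2 (Y \<omega>))"
    by (rule integral_nonneg_AE) (use ramp_bounds[OF ab1] ramp_bounds[OF ab2] in auto)
  moreover have "0 \<le> (LBINT t:{a2..b2}. ?q t)"
    unfolding set_lebesgue_integral_def by (rule integral_nonneg_AE) (use q0 in \<open>auto simp: indicator_def\<close>)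
  ultimately show ?thesis by simp
qed

end

lemma integrable_Icc_bounded:
  fixes f :: "real \<Rightarrow> real"
  assumes "f \<in> borel_measurable lborel" "\<And>x. \<bar>f x\<bar> \<le> B"
  shows "integrable lborel (\<lambda>x. indicator {a..b} x * f x)"
  using integrableI_bounded_set_indicator[of "{a..b}" lborel f B] assms
  by (auto simp: emeasure_lborel_Icc_eq)

lemma set_integral_abs_le:
  fixes f :: "real \<Rightarrow> real"
  assumes "f \<in> borel_measurable lborel" "\<And>x. \<bar>f x\<bar> \<le> B" "a \<le> b"
  shows "\<bar>LBINT x:{a..b}. f x\<bar> \<le> B * (b - a)"
proof -
  have ii: "integrable lborel (\<lambda>x. indicator {a..b} x * B :: real)"
    by (rule integrable_Icc_bounded[where B="\<bar>B\<bar>"]) auto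
  have "\<bar>LBINT x:{a..b}. f x\<bar> \<le> (\<integral>x. indicator {a..b} x * B \<partial>lborel)"
    unfolding set_lebesgue_integral_def
    by (rule integral_abs_bound_integral) (use integrable_Icc_bounded[OF assms(1,2)] ii assms(2) in \<open>auto simp: indicator_def\<close>)
  also have "\<dots> = B * (b - a)" using assms(3) by (simp add: mult.commute)
  finally show ?thesis .
qed

lemma set_integral_diff_real:
  fixes f g :: "real \<Rightarrow> real"
  assumes "integrable lborel (\<lambda>x. indicator A x * f x)" "integrable lborel (\<lambda>x. indicator A x * g x)"
  shows "(LBINT x:A. f x - g x) = (LBINT x:A. f x) - (LBINT x:A. g x)"
  unfolding set_lebesgue_integral_def real_scaleR_def
  by (subst Bochner_Integration.integral_diff[symmetric]) (use assms in \<open>auto simp: right_diff_distrib\<close>)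

context prob_space begin

definition Hq :: "('a \<Rightarrow> real) \<Rightarrow> ('a \<Rightarrow> real) \<Rightarrow> real \<Rightarrow> real \<Rightarrow> real" where
  "Hq X Y s t = prob {\<omega>\<in>space M. s < X \<omega> \<and> t < Y \<omega>} - prob {\<omega>\<in>space M. s < X \<omega>} * prob {\<omega>\<in>space M. t < Y \<omega>}"

lemma Hq_measurable[measurable]:
  assumes [measurable]: "X \<in> borel_measurable M" "Y \<in> borel_measurable M"
  shows "(\<lambda>(t, s). Hq X Y s t) \<in> borel_measurable (lborel \<Otimes>\<^sub>M lborel)"
  unfolding Hq_def by measurable

lemma Hq_bound: "\<bar>Hq X Y s t\<bar> \<le> 1"
proof -
  have "0 \<le> prob {\<omega>\<in>space M. s < X \<omega> \<and> t < Y \<omega>}" "prob {\<omega>\<in>space M. s < X \<omega> \<and> t < Y \<omega>} \<le> 1"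
       "0 \<le> prob {\<omega>\<in>space M. s < X \<omega>} * prob {\<omega>\<in>space M. t < Y \<omega>}"
       "prob {\<omega>\<in>space M. s < X \<omega>} * prob {\<omega>\<in>space M. t < Y \<omega>} \<le> 1"
    by (auto intro!: mult_le_one)
  then show ?thesis unfolding Hq_def by linarith
qed

lemma cov_ramp:
  assumes [measurable]: "X \<in> borel_measurable M" "Y \<in> borel_measurable M"
    and ab1: "a1 \<le> b1" and ab2: "a2 \<le> b2"
  shows "expectation (\<lambda>\<omega>. ramp a1 b1 (X \<omega>) * ramp a2 b2 (Y \<omega>))
      - expectation (\<lambda>\<omega>. ramp a1 b1 (X \<omega>)) * expectation (\<lambda>\<omega>. ramp a2 b2 (Y \<omega>))
      = (LBINT t:{a2..b2}. LBINT s:{a1..b1}. Hq X Y s t)"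
proof -
  let ?A = "\<lambda>s t. prob {\<omega>\<in>space M. s < X \<omega> \<and> t < Y \<omega>}"
  let ?P1 = "\<lambda>s. prob {\<omega>\<in>space M. s < X \<omega>}"
  let ?P2 = "\<lambda>t. prob {\<omega>\<in>space M. t < Y \<omega>}"
  have mA[measurable]: "(\<lambda>(t, s). ?A s t) \<in> borel_measurable (lborel \<Otimes>\<^sub>M lborel)" by measurable
  have mP1[measurable]: "?P1 \<in> borel_measurable lborel" by measurable
  have mP2[measurable]: "?P2 \<in> borel_measurable lborel" by measurable
  have iA: "integrable lborel (\<lambda>s. indicator {a1..b1} s * ?A s t)" for t
    by (rule integrable_Icc_bounded[where B=1]) auto
  have iP: "integrable lborel (\<lambda>s. indicator {a1..b1} s * (?P1 s * ?P2 t))" for t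
    by (rule integrable_Icc_bounded[where B=1]) (auto intro!: mult_le_one)
  have mqA: "(\<lambda>t. LBINT s:{a1..b1}. ?A s t) \<in> borel_measurable lborel"
    unfolding set_lebesgue_integral_def by measurable
  have bqA: "\<bar>LBINT s:{a1..b1}. ?A s t\<bar> \<le> 1 * (b1 - a1)" for t
    by (rule set_integral_abs_le) (use ab1 in auto)
  have iqA: "integrable lborel (\<lambda>t. indicator {a2..b2} t * (LBINT s:{a1..b1}. ?A s t))"
    by (rule integrable_Icc_bounded[OF mqA bqA])
  have eqP: "(LBINT s:{a1..b1}. ?P1 s * ?P2 t) = (LBINT s:{a1..b1}. ?P1 s) * ?P2 t" for t
    unfolding set_lebesgue_integral_def by (simp add: mult.assoc[symmetric])
  have iqP: "integrable lborel (\<lambda>t. indicator {a2..b2} t * (LBINT s:{a1..b1}. ?P1 s * ?P2 t))"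
    unfolding eqP
    by (rule integrable_Icc_bounded[where B="\<bar>LBINT s:{a1..b1}. ?P1 s\<bar>"]) (auto simp: abs_mult intro!: mult_left_le)
  have "expectation (\<lambda>\<omega>. ramp a1 b1 (X \<omega>)) * expectation (\<lambda>\<omega>. ramp a2 b2 (Y \<omega>))
      = (LBINT s:{a1..b1}. ?P1 s) * (LBINT t:{a2..b2}. ?P2 t)"
    by (simp add: ramp_expect ab1 ab2)
  also have "\<dots> = (LBINT t:{a2..b2}. (LBINT s:{a1..b1}. ?P1 s) * ?P2 t)"
  proof -
    let ?c = "LBINT s:{a1..b1}. ?P1 s"
    have "?c * (LBINT t:{a2..b2}. ?P2 t) = (\<integral>t. ?c * (indicator {a2..b2} t * ?P2 t) \<partial>lborel)"
      unfolding set_lebesgue_integral_def real_scaleR_def by simp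
    also have "\<dots> = (LBINT t:{a2..b2}. ?c * ?P2 t)"
      unfolding set_lebesgue_integral_def real_scaleR_def by (rule Bochner_Integration.integral_cong) (auto simp: ac_simps)
    finally show ?thesis .
  qed
  also have "\<dots> = (LBINT t:{a2..b2}. LBINT s:{a1..b1}. ?P1 s * ?P2 t)"
    by (simp only: eqP)
  finally have e2: "expectation (\<lambda>\<omega>. ramp a1 b1 (X \<omega>)) * expectation (\<lambda>\<omega>. ramp a2 b2 (Y \<omega>))
      = (LBINT t:{a2..b2}. LBINT s:{a1..b1}. ?P1 s * ?P2 t)" .
  have "(LBINT t:{a2..b2}. LBINT s:{a1..b1}. Hq X Y s t)
      = (LBINT t:{a2..b2}. (LBINT s:{a1..b1}. ?A s t) - (LBINT s:{a1..b1}. ?P1 s * ?P2 t))"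
  proof -
    have "(LBINT s:{a1..b1}. Hq X Y s t) = (LBINT s:{a1..b1}. ?A s t) - (LBINT s:{a1..b1}. ?P1 s * ?P2 t)" for t
      unfolding set_lebesgue_integral_def Hq_def real_scaleR_def
      by (subst Bochner_Integration.integral_diff[symmetric]) (use iA iP in \<open>auto simp: right_diff_distrib\<close>)
    then show ?thesis by simp
  qed
  also have "\<dots> = (LBINT t:{a2..b2}. LBINT s:{a1..b1}. ?A s t) - (LBINT t:{a2..b2}. LBINT s:{a1..b1}. ?P1 s * ?P2 t)"
    by (rule set_integral_diff_real[OF iqA iqP])
  finally show ?thesis using e2 by (simp add: ramp_expect2 ab1 ab2)
qed

end

context prob_space begin

lemma G_eq:
  assumes "0 \<le> u" "0 \<le> v"
  shows "G M X Y u v = (LBINT t:{-v..v}. LBINT s:{-u..u}. Hq X Y s t)"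
proof -
  have "G M X Y u v = (LBINT t:{-v..v}. LBINT s:{-u..u}. Hq X Y s t)"
    unfolding G_def Hq_def using assms
    by (simp add: interval_integral_Icc)
  then show ?thesis .
qed

lemma Hq_mono_box:
  assumes [measurable]: "X \<in> borel_measurable M" "Y \<in> borel_measurable M"
    and H0: "\<And>s t. 0 \<le> Hq X Y s t"
    and "a1 \<le> b1" "a2 \<le> b2" "-u \<le> a1" "b1 \<le> u" "-v \<le> a2" "b2 \<le> v"
  shows "0 \<le> (LBINT t:{a2..b2}. LBINT s:{a1..b1}. Hq X Y s t)"
    and "(LBINT t:{a2..b2}. LBINT s:{a1..b1}. Hq X Y s t) \<le> G M X Y u v"
proof -
  have mq: "(\<lambda>t. LBINT s:{c..d}. Hq X Y s t) \<in> borel_measurable lborel" for c d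
    unfolding set_lebesgue_integral_def by measurable
  have mh: "(\<lambda>s. Hq X Y s t) \<in> borel_measurable lborel" for t
    using Hq_measurable[OF assms(1,2)] by measurable
  have ih: "integrable lborel (\<lambda>s. indicator {c..d} s * Hq X Y s t)" for c d t
    by (rule integrable_Icc_bounded[OF mh Hq_bound])
  have qb: "\<bar>LBINT s:{c..d}. Hq X Y s t\<bar> \<le> 1 * (d - c)" if "c \<le> d" for c d t
    by (rule set_integral_abs_le[OF mh Hq_bound that])
  have q0: "0 \<le> (LBINT s:{c..d}. Hq X Y s t)" for c d t
    unfolding set_lebesgue_integral_def by (rule integral_nonneg_AE) (auto simp: H0)
  have iq: "integrable lborel (\<lambda>t. indicator {e..f} t * (LBINT s:{c..d}. Hq X Y s t))" if "c \<le> d" for c d e f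
    by (rule integrable_Icc_bounded[OF mq qb[OF that]])
  have qmono: "(LBINT s:{a1..b1}. Hq X Y s t) \<le> (LBINT s:{-u..u}. Hq X Y s t)" for t
    unfolding set_lebesgue_integral_def real_scaleR_def
    by (rule integral_mono[OF ih ih]) (use assms H0 in \<open>auto simp: indicator_def\<close>)
  show "0 \<le> (LBINT t:{a2..b2}. LBINT s:{a1..b1}. Hq X Y s t)"
    unfolding set_lebesgue_integral_def[of _ "{a2..b2}"] by (rule integral_nonneg_AE) (auto simp: q0)
  have "(LBINT t:{a2..b2}. LBINT s:{a1..b1}. Hq X Y s t) \<le> (LBINT t:{-v..v}. LBINT s:{-u..u}. Hq X Y s t)"
    unfolding set_lebesgue_integral_def[of _ "{a2..b2}"] set_lebesgue_integral_def[of _ "{-v..v}"] real_scaleR_def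
    apply (rule integral_mono[OF iq iq])
    using assms apply simp
    using assms apply simp
    using assms q0 qmono by (auto simp: indicator_def intro: order_trans)
  also have "\<dots> = G M X Y u v"
    using G_eq assms by simp
  finally show "(LBINT t:{a2..b2}. LBINT s:{a1..b1}. Hq X Y s t) \<le> G M X Y u v" .
qed

lemma PQD_Hq_nonneg:
  assumes pqd: "pairwise_PQD M X" and "1 \<le> k" "1 \<le> j" "k \<noteq> j"
    and [measurable]: "X k \<in> borel_measurable M" "X j \<in> borel_measurable M"
  shows "0 \<le> Hq (X k) (X j) s t"
proof -
  let ?A = "{\<omega>\<in>space M. X k \<omega> \<le> s}" and ?B = "{\<omega>\<in>space M. X j \<omega> \<le> t}"
  have AB: "?A \<in> events" "?B \<in> events" by measurable
  have pq: "prob (?A \<inter> ?B) - prob ?A * prob ?B \<ge> 0"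
  proof -
    have "?A \<inter> ?B = {\<omega>\<in>space M. X k \<omega> \<le> s \<and> X j \<omega> \<le> t}" by auto
    then show ?thesis using pqd assms unfolding pairwise_PQD_def by auto
  qed
  have e1: "{\<omega>\<in>space M. s < X k \<omega> \<and> t < X j \<omega>} = space M - (?A \<union> ?B)" by auto
  have e2: "{\<omega>\<in>space M. s < X k \<omega>} = space M - ?A" by auto
  have e3: "{\<omega>\<in>space M. t < X j \<omega>} = space M - ?B" by auto
  have un: "prob (?A \<union> ?B) = prob ?A + prob ?B - prob (?A \<inter> ?B)"
    using AB by (intro measure_Un3) (auto simp: fmeasurable_def emeasure_eq_measure)
  show ?thesis
    unfolding Hq_def e1 e2 e3 using AB un pq
    by (simp add: prob_compl sets.Un algebra_simps)
qed

end

definition kseq :: "real \<Rightarrow> nat \<Rightarrow> nat" where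
  "kseq \<alpha> m = nat \<lfloor>\<alpha> ^ m\<rfloor>"

lemma kseq_ge1: "1 \<le> \<alpha> \<Longrightarrow> 1 \<le> kseq \<alpha> m"
  unfolding kseq_def by (simp add: le_nat_iff one_le_power)

lemma kseq_le: "1 \<le> \<alpha> \<Longrightarrow> real (kseq \<alpha> m) \<le> \<alpha> ^ m"
  unfolding kseq_def using one_le_power[of \<alpha> m] by simp

lemma kseq_gt: "1 \<le> \<alpha> \<Longrightarrow> \<alpha> ^ m < real (kseq \<alpha> m) + 1"
  unfolding kseq_def using one_le_power[of \<alpha> m] by linarith

lemma kseq_half: "1 \<le> \<alpha> \<Longrightarrow> \<alpha> ^ m \<le> 2 * real (kseq \<alpha> m)"
  using kseq_gt[of \<alpha> m] kseq_ge1[of \<alpha> m] by linarith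

lemma kseq_mono: "1 \<le> \<alpha> \<Longrightarrow> m \<le> m' \<Longrightarrow> kseq \<alpha> m \<le> kseq \<alpha> m'"
  unfolding kseq_def by (intro nat_mono floor_mono power_increasing)

lemma kseq_Suc: "1 \<le> \<alpha> \<Longrightarrow> real (kseq \<alpha> (Suc m)) \<le> \<alpha> * (real (kseq \<alpha> m) + 1)"
proof -
  assume a: "1 \<le> \<alpha>"
  have "real (kseq \<alpha> (Suc m)) \<le> \<alpha> ^ Suc m" by (rule kseq_le[OF a])
  also have "\<dots> = \<alpha> * \<alpha> ^ m" by simp
  also have "\<dots> \<le> \<alpha> * (real (kseq \<alpha> m) + 1)"
    using kseq_gt[OF a, of m] a by (intro mult_left_mono) auto
  finally show ?thesis .
qed

lemma kseq_bracket:
  assumes a: "1 < \<alpha>" and N: "1 \<le> N"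
  shows "\<exists>m. kseq \<alpha> m \<le> N \<and> N \<le> kseq \<alpha> (Suc m)"
proof -
  obtain n where n: "real N < \<alpha> ^ n" using real_arch_pow[OF a] by blast
  define m where "m = (LEAST m. real N < \<alpha> ^ Suc m)"
  have ex: "real N < \<alpha> ^ Suc n" using n a
    by (smt (verit, ccfv_SIG) le_imp_less_Suc less_imp_le power_strict_increasing_iff)
  have m1: "real N < \<alpha> ^ Suc m" unfolding m_def by (rule LeastI[of _ n]) (rule ex)
  have m2: "\<alpha> ^ m \<le> real N"
  proof (cases m)
    case 0 then show ?thesis using N by simp
  next
    case (Suc m')
    have "\<not> real N < \<alpha> ^ Suc m'"
    proof
      assume "real N < \<alpha> ^ Suc m'"
      then have "m \<le> m'" unfolding m_def by (rule Least_le)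
      then show False using Suc by simp
    qed
    then show ?thesis using Suc by simp
  qed
  have "kseq \<alpha> m \<le> N" using kseq_le[of \<alpha> m] a m2 by simp
  moreover have "N \<le> kseq \<alpha> (Suc m)"
    unfolding kseq_def using m1 by (simp add: le_nat_iff le_floor_iff)
  ultimately show ?thesis by blast
qed

lemma kseq_large:
  assumes a: "1 < \<alpha>"
  shows "\<exists>m0. \<forall>m\<ge>m0. B \<le> real (kseq \<alpha> m)"
proof -
  obtain n where n: "2 * B < \<alpha> ^ n" using real_arch_pow[OF a] by blast
  have "B \<le> real (kseq \<alpha> m)" if "m \<ge> n" for m
  proof -
    have "\<alpha> ^ n \<le> \<alpha> ^ m" using that a by (intro power_increasing) auto
    then show ?thesis using kseq_half[of \<alpha> m] n a by linarith
  qed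
  then show ?thesis by blast
qed

lemma geom_partial_le:
  fixes q :: real
  assumes "0 \<le> q" "q < 1"
  shows "(\<Sum>l<n. q ^ l) \<le> 1 / (1 - q)"
proof -
  have "(\<Sum>l<n. q ^ l) = (1 - q ^ n) / (1 - q)" using assms by (simp add: sum_gp_strict)
  also have "\<dots> \<le> 1 / (1 - q)" using assms by (intro divide_right_mono) auto
  finally show ?thesis .
qed

lemma kseq_sum_bound:
  assumes a: "1 < \<alpha>" and i: "1 \<le> i"
  shows "(\<Sum>m\<in>{m. m < M \<and> i \<le> kseq \<alpha> m}. 1 / (real (kseq \<alpha> m))\<^sup>2)
          \<le> (4 * \<alpha>\<^sup>2 / (\<alpha>\<^sup>2 - 1)) / (real i)\<^sup>2"
proof -
  define q where "q = 1 / \<alpha>\<^sup>2"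
  have q0: "0 \<le> q" and q1: "q < 1" unfolding q_def using a by (auto simp: power_less_one_iff)
  obtain n where n: "real i < \<alpha> ^ n" using real_arch_pow[OF a] by blast
  define m0 where "m0 = (LEAST m. real i \<le> \<alpha> ^ m)"
  have m0: "real i \<le> \<alpha> ^ m0" unfolding m0_def by (rule LeastI[of _ n]) (use n in auto)
  have sub: "{m. m < M \<and> i \<le> kseq \<alpha> m} \<subseteq> {m0..<M}"
  proof
    fix m assume "m \<in> {m. m < M \<and> i \<le> kseq \<alpha> m}"
    then have "m < M" "i \<le> kseq \<alpha> m" by auto
    then have "real i \<le> \<alpha> ^ m" using kseq_le[of \<alpha> m] a by (meson less_imp_le of_nat_le_iff order_trans)
    then have "m0 \<le> m" unfolding m0_def by (rule Least_le)
    then show "m \<in> {m0..<M}" using \<open>m < M\<close> by auto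
  qed
  have tm: "1 / (real (kseq \<alpha> m))\<^sup>2 \<le> 4 * q ^ m" for m
  proof -
    have k1: "1 \<le> real (kseq \<alpha> m)" using kseq_ge1[of \<alpha> m] a by simp
    have "\<alpha> ^ m \<le> 2 * real (kseq \<alpha> m)" using kseq_half[of \<alpha> m] a by simp
    then have "(\<alpha> ^ m)\<^sup>2 \<le> (2 * real (kseq \<alpha> m))\<^sup>2" using a by (intro power_mono) auto
    then have "(\<alpha> ^ m)\<^sup>2 \<le> 4 * (real (kseq \<alpha> m))\<^sup>2" by (simp add: power_mult_distrib)
    moreover have "q ^ m = 1 / (\<alpha> ^ m)\<^sup>2" unfolding q_def by (simp add: power_divide power_mult[symmetric] power_mult_distrib mult.commute power_even_eq)
    ultimately have "1 \<le> q ^ m * (4 * (real (kseq \<alpha> m))\<^sup>2)"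
      using q0 a by (simp add: field_simps) (metis mult_left_mono zero_le_power q0)
    then show ?thesis using k1 by (simp add: field_simps)
  qed
  have "(\<Sum>m\<in>{m. m < M \<and> i \<le> kseq \<alpha> m}. 1 / (real (kseq \<alpha> m))\<^sup>2) \<le> (\<Sum>m\<in>{m. m < M \<and> i \<le> kseq \<alpha> m}. 4 * q ^ m)"
    by (intro sum_mono tm)
  also have "\<dots> \<le> (\<Sum>m\<in>{m0..<M}. 4 * q ^ m)"
    by (intro sum_mono2 sub) (use q0 in auto)
  also have "\<dots> \<le> 4 * q ^ m0 / (1 - q)"
  proof (cases "m0 \<le> M")
    case True
    have "{m0..<M} = (\<lambda>l. m0 + l) ` {..<M - m0}"
    proof (intro set_eqI iffI)
      fix x assume "x \<in> {m0..<M}"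
      then have "x = m0 + (x - m0)" "x - m0 \<in> {..<M - m0}" by auto
      then show "x \<in> (\<lambda>l. m0 + l) ` {..<M - m0}" by blast
    qed auto
    then have "(\<Sum>m\<in>{m0..<M}. 4 * q ^ m) = (\<Sum>l<M - m0. 4 * q ^ (m0 + l))"
      by (simp add: sum.reindex inj_on_def)
    also have "\<dots> = 4 * q ^ m0 * (\<Sum>l<M - m0. q ^ l)"
      by (simp add: power_add sum_distrib_left mult.assoc)
    also have "\<dots> \<le> 4 * q ^ m0 * (1 / (1 - q))"
      by (intro mult_left_mono geom_partial_le q0 q1) (use q0 in auto)
    finally show ?thesis by simp
  next
    case False
    then show ?thesis using q0 q1 by simp
  qed
  also have "\<dots> = (4 * \<alpha>\<^sup>2 / (\<alpha>\<^sup>2 - 1)) * (1 / (\<alpha> ^ m0)\<^sup>2)"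
  proof -
    have A: "\<alpha>\<^sup>2 > 1" using a by (simp add: power_less_one_iff one_less_power)
    have P: "(\<alpha> ^ m0)\<^sup>2 > 0" using a by simp
    have qm: "q ^ m0 = 1 / (\<alpha> ^ m0)\<^sup>2" unfolding q_def
      by (simp add: power_divide power_mult[symmetric] power_mult_distrib mult.commute power_even_eq)
    have gen: "4 * (1 / P) / (1 - 1 / A) = (4 * A / (A - 1)) * (1 / P)" if "A > 1" "P > 0" for A P :: real
      using that by (simp add: field_simps)
    show ?thesis unfolding qm using gen[OF A P] by (simp add: q_def)
  qed
  also have "\<dots> \<le> (4 * \<alpha>\<^sup>2 / (\<alpha>\<^sup>2 - 1)) * (1 / (real i)\<^sup>2)"
  proof (intro mult_left_mono divide_left_mono power_mono)
    show "0 \<le> 4 * \<alpha>\<^sup>2 / (\<alpha>\<^sup>2 - 1)" using a by (simp add: one_less_power less_imp_le)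
  qed (use i m0 a in auto)
  finally show ?thesis by simp
qed

lemma cesaro:
  fixes a :: "nat \<Rightarrow> real"
  assumes "a \<longlonglongrightarrow> L"
  shows "(\<lambda>n. (\<Sum>i=1..n. a i) / real n) \<longlonglongrightarrow> L"
proof (rule LIMSEQ_I)
  fix e :: real assume e: "0 < e"
  obtain N0 where N0: "\<And>i. i \<ge> N0 \<Longrightarrow> \<bar>a i - L\<bar> < e / 2"
    using LIMSEQ_D[OF assms, of "e/2"] e by auto
  define C where "C = (\<Sum>i=1..N0. \<bar>a i - L\<bar>)"
  have C0: "0 \<le> C" unfolding C_def by (auto intro: sum_nonneg)
  obtain N1 :: nat where N1: "2 * C / e < real N1" using reals_Archimedean2 by blast
  show "\<exists>no. \<forall>n\<ge>no. norm ((\<Sum>i=1..n. a i) / real n - L) < e"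
  proof (intro exI allI impI)
    fix n assume n: "n \<ge> max (Suc N0) N1"
    then have npos: "real n > 0" by simp
    have split: "{1..n} = {1..N0} \<union> {Suc N0..n}" using n by auto
    have "(\<Sum>i=1..n. a i) / real n - L = (\<Sum>i=1..n. a i - L) / real n"
      using npos by (simp add: sum_subtractf field_simps)
    also have "(\<Sum>i=1..n. a i - L) = (\<Sum>i=1..N0. a i - L) + (\<Sum>i=Suc N0..n. a i - L)"
      unfolding split by (rule sum.union_disjoint) auto
    finally have eq: "(\<Sum>i=1..n. a i) / real n - L = ((\<Sum>i=1..N0. a i - L) + (\<Sum>i=Suc N0..n. a i - L)) / real n" .
    have b1: "\<bar>\<Sum>i=1..N0. a i - L\<bar> \<le> C" unfolding C_def by (rule sum_abs)
    have "\<bar>\<Sum>i=Suc N0..n. a i - L\<bar> \<le> (\<Sum>i=Suc N0..n. \<bar>a i - L\<bar>)" by (rule sum_abs)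
    also have "\<dots> \<le> (\<Sum>i=Suc N0..n. e / 2)" by (intro sum_mono) (use N0 in \<open>auto intro: less_imp_le\<close>)
    also have "\<dots> \<le> real n * (e / 2)" using e by simp
    finally have b2: "\<bar>\<Sum>i=Suc N0..n. a i - L\<bar> \<le> real n * (e / 2)" .
    have "C < real n * (e / 2)"
    proof -
      have "2 * C / e < real n" using N1 n by linarith
      then show ?thesis using e by (simp add: field_simps)
    qed
    then have "\<bar>(\<Sum>i=1..N0. a i - L) + (\<Sum>i=Suc N0..n. a i - L)\<bar> < real n * e"
      using b1 b2 by linarith
    then show "norm ((\<Sum>i=1..n. a i) / real n - L) < e"
      unfolding eq using npos by (simp add: field_simps abs_divide)
  qed
qed

lemma mono_from_Suc:
  fixes s :: "nat \<Rightarrow> real"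
  assumes "\<And>N. s N \<le> s (Suc N)" "a \<le> b"
  shows "s a \<le> s b"
  using assms by (metis lift_Suc_mono_le)

lemma interp:
  fixes s :: "nat \<Rightarrow> real" and \<mu> :: real
  assumes mono: "\<And>N. s N \<le> s (Suc N)" and nn: "\<And>N. 0 \<le> s N"
    and lim: "\<And>r. (\<lambda>m. s (kseq (1 + 1/(real r + 1)) m) / real (kseq (1 + 1/(real r + 1)) m)) \<longlonglongrightarrow> \<mu>"
  shows "(\<lambda>N. s N / real N) \<longlonglongrightarrow> \<mu>"
proof (rule LIMSEQ_I)
  have mu0: "0 \<le> \<mu>"
    by (rule LIMSEQ_le_const[OF lim[of 0]]) (intro exI allI impI divide_nonneg_nonneg nn, simp)
  fix e :: real assume e: "0 < e"
  define \<beta> where "\<beta> = (\<mu> + e) / (\<mu> + e / 2)"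
  have \<beta>1: "\<beta> > 1" unfolding \<beta>_def using e mu0 by (simp add: field_simps)
  obtain r :: nat where r: "3 / (\<beta> - 1) < real r + 1"
    using reals_Archimedean2[of "3 / (\<beta> - 1)"] by (metis add.commute add_strict_increasing zero_less_one less_imp_le)
  define x where "x = 1 / (real r + 1)"
  define \<alpha> where "\<alpha> = 1 + x"
  have x0: "0 < x" "x \<le> 1" unfolding x_def by auto
  have a1: "1 < \<alpha>" unfolding \<alpha>_def using x0 by simp
  have a2: "\<alpha> * \<alpha> \<le> \<beta>"
  proof -
    have "3 * x < \<beta> - 1" unfolding x_def using r \<beta>1 by (simp add: field_simps)
    moreover have "\<alpha> * \<alpha> \<le> 1 + 3 * x" unfolding \<alpha>_def using x0 by (simp add: algebra_simps power2_eq_square)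
    ultimately show ?thesis by simp
  qed
  let ?K = "kseq \<alpha>"
  have Kpos: "1 \<le> ?K m" for m using kseq_ge1[of \<alpha> m] a1 by simp
  obtain m1 where m1: "\<And>m. m \<ge> m1 \<Longrightarrow> \<bar>s (?K m) / real (?K m) - \<mu>\<bar> < e / 2"
    using LIMSEQ_D[OF lim[of r], of "e/2"] e unfolding \<alpha>_def x_def by auto
  obtain m2 where m2: "\<And>m. m \<ge> m2 \<Longrightarrow> real r + 1 \<le> real (?K m)"
    using kseq_large[OF a1, of "real r + 1"] by auto
  define m0 where "m0 = max m1 m2"
  show "\<exists>no. \<forall>N\<ge>no. norm (s N / real N - \<mu>) < e"
  proof (intro exI allI impI)
    fix N assume N: "N \<ge> ?K m0 + 1"
    then have N1: "1 \<le> N" by simp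
    obtain m where m: "?K m \<le> N" "N \<le> ?K (Suc m)" using kseq_bracket[OF a1 N1] by blast
    have mm0: "m \<ge> m0"
    proof (rule ccontr)
      assume "\<not> m \<ge> m0"
      then have "Suc m \<le> m0" by simp
      then have "?K (Suc m) \<le> ?K m0" using kseq_mono a1 by simp
      then show False using m N by simp
    qed
    have Km: "real r + 1 \<le> real (?K m)" using m2 mm0 unfolding m0_def by simp
    have Kpos': "0 < real (?K m)" "0 < real (?K (Suc m))" using Kpos[of m] Kpos[of "Suc m"] by auto
    have ratio: "real (?K (Suc m)) \<le> \<alpha> * \<alpha> * real (?K m)"
    proof -
      have "real (?K (Suc m)) \<le> \<alpha> * (real (?K m) + 1)" using kseq_Suc[of \<alpha> m] a1 by simp
      also have "\<dots> = \<alpha> * real (?K m) * (1 + 1 / real (?K m))" using Kpos'(1) by (simp add: field_simps)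
      also have "\<dots> \<le> \<alpha> * real (?K m) * \<alpha>"
      proof (intro mult_left_mono)
        have "1 / real (?K m) \<le> x" unfolding x_def using Km by (intro divide_left_mono) auto
        then show "1 + 1 / real (?K m) \<le> \<alpha>" unfolding \<alpha>_def by simp
      qed (use a1 Kpos'(1) in auto)
      finally show ?thesis by (simp add: mult_ac)
    qed
    have Npos: "0 < real N" using N1 by simp
    have sN1: "s N \<le> s (?K (Suc m))" by (rule mono_from_Suc[of s, OF mono m(2)])
    have sN2: "s (?K m) \<le> s N" by (rule mono_from_Suc[of s, OF mono m(1)])
    have up1: "s (?K (Suc m)) / real (?K (Suc m)) < \<mu> + e / 2" using m1[of "Suc m", unfolded abs_less_iff] mm0 unfolding m0_def by linarith
    have lo1: "\<mu> - e / 2 < s (?K m) / real (?K m)" using m1[of m, unfolded abs_less_iff] mm0 unfolding m0_def by linarith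
    have upper: "s N / real N < \<mu> + e"
      proof -
        have strict: "s (?K (Suc m)) / real (?K (Suc m)) * (real (?K (Suc m)) / real (?K m)) < (\<mu> + e / 2) * (\<alpha> * \<alpha>)"
        proof (rule mult_strict_right_mono[THEN order.strict_trans2])
          show "s (?K (Suc m)) / real (?K (Suc m)) < \<mu> + e / 2" by (rule up1)
          show "0 < real (?K (Suc m)) / real (?K m)" using Kpos' by simp
          show "(\<mu> + e / 2) * (real (?K (Suc m)) / real (?K m)) \<le> (\<mu> + e / 2) * (\<alpha> * \<alpha>)"
            using ratio Kpos'(1) mu0 e by (intro mult_left_mono) (auto simp: field_simps)
        qed
        have "s N / real N \<le> s (?K (Suc m)) / real (?K m)"
          using sN1 m(1) Npos Kpos'(1) nn[of N] by (intro frac_le) (auto intro: order_trans[OF nn])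
        also have "\<dots> = (s (?K (Suc m)) / real (?K (Suc m))) * (real (?K (Suc m)) / real (?K m))"
          using Kpos' by simp
        also have "\<dots> < (\<mu> + e / 2) * (\<alpha> * \<alpha>)" by (rule strict)
        also have "\<dots> \<le> (\<mu> + e / 2) * \<beta>" using a2 mu0 e by (intro mult_left_mono) auto
        also have "\<dots> = \<mu> + e" unfolding \<beta>_def using mu0 e by (simp add: field_simps)
        finally show ?thesis .
      qed
    have lower: "\<mu> - e < s N / real N"
    proof (cases "\<mu> - e / 2 \<le> 0")
      case True
      then have "\<mu> - e < 0" using e by simp
      also have "0 \<le> s N / real N" using nn Npos by simp
      finally show ?thesis .
    next
      case False
      have "\<mu> - e < (\<mu> - e / 2) / \<beta>"
      proof -
        have "(\<mu> - e) * (\<mu> + e) < (\<mu> - e / 2) * (\<mu> + e / 2)" using e by (simp add: algebra_simps power2_eq_square)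
        then show ?thesis unfolding \<beta>_def using mu0 e by (simp add: field_simps)
      qed
      also have "\<dots> \<le> (\<mu> - e / 2) / (\<alpha> * \<alpha>)"
        using False a2 a1 \<beta>1 by (intro divide_left_mono) auto
      also have "\<dots> \<le> (s (?K m) / real (?K m)) * (real (?K m) / real (?K (Suc m)))"
      proof -
        have "1 / (\<alpha> * \<alpha>) \<le> real (?K m) / real (?K (Suc m))"
          using ratio Kpos' a1 by (simp add: field_simps)
        then have "(\<mu> - e / 2) * (1 / (\<alpha> * \<alpha>)) \<le> (s (?K m) / real (?K m)) * (real (?K m) / real (?K (Suc m)))"
          using lo1 False Kpos' by (intro mult_mono) auto
        then show ?thesis by simp
      qed
      also have "\<dots> = s (?K m) / real (?K (Suc m))" using Kpos' by simp
      also have "\<dots> \<le> s N / real N"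
        using sN2 m(2) Npos Kpos' nn by (intro frac_le) auto
      finally show ?thesis .
    qed
    show "norm (s N / real N - \<mu>) < e" using upper lower by simp
  qed
qed

lemma tail_inv_sq_strong:
  "a \<le> N \<Longrightarrow> (\<Sum>i\<in>{Suc a..N}. 1 / (real i)\<^sup>2) \<le> 2 / (real a + 1) - 2 / (real N + 1)"
proof (induction N)
  case 0 then show ?case by simp
next
  case (Suc N)
  show ?case
  proof (cases "a = Suc N")
    case True then show ?thesis by simp
  next
    case False
    then have aN: "a \<le> N" using Suc.prems by simp
    have "{Suc a..Suc N} = insert (Suc N) {Suc a..N}" using aN by auto
    then have "(\<Sum>i\<in>{Suc a..Suc N}. 1 / (real i)\<^sup>2) = 1 / (real (Suc N))\<^sup>2 + (\<Sum>i\<in>{Suc a..N}. 1 / (real i)\<^sup>2)"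
      by simp
    also have "\<dots> \<le> 1 / (real (Suc N))\<^sup>2 + (2 / (real a + 1) - 2 / (real N + 1))"
      using Suc.IH[OF aN] by simp
    also have "\<dots> \<le> 2 / (real a + 1) - 2 / (real (Suc N) + 1)"
    proof -
      have e1: "2 / (real N + 1) - 2 / (real N + 2) = (1 / (real N + 1)) * (2 / (real N + 2))"
        by (simp add: field_simps)
      have e2: "1 / (real N + 1)\<^sup>2 = (1 / (real N + 1)) * (1 / (real N + 1))"
        by (simp add: power2_eq_square)
      have e3: "1 / (real N + 1) \<le> 2 / (real N + 2)"
        by (simp add: field_simps)
      have "1 / (real N + 1)\<^sup>2 \<le> 2 / (real N + 1) - 2 / (real N + 2)"
        unfolding e1 e2 by (intro mult_left_mono e3) simp
      then show ?thesis by (simp add: add.commute)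
    qed
    finally show ?thesis .
  qed
qed

lemma tail_inv_sq: "(\<Sum>i\<in>{Suc a..N}. 1 / (real i)\<^sup>2) \<le> 2 / (real a + 1)"
proof (cases "a \<le> N")
  case True
  then show ?thesis using tail_inv_sq_strong[OF True] by (smt (verit) divide_nonneg_nonneg of_nat_0_le_iff)
next
  case False
  then have "{Suc a..N} = {}" by auto
  then show ?thesis by simp
qed

lemma sum_min_sq_bound:
  fixes y :: real
  assumes y: "0 \<le> y"
  shows "(\<Sum>i=1..N. (min y (real i))\<^sup>2 / (real i)\<^sup>2) \<le> 3 * y"
proof -
  define a where "a = nat \<lfloor>y\<rfloor>"
  have ay: "real a \<le> y" "y < real a + 1" unfolding a_def using y by linarith+
  have "(\<Sum>i=1..N. (min y (real i))\<^sup>2 / (real i)\<^sup>2) \<le> (\<Sum>i=1..N. if i \<le> a then 1 else y\<^sup>2 * (1 / (real i)\<^sup>2))"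
  proof (rule sum_mono)
    fix i assume i: "i \<in> {1..N}"
    show "(min y (real i))\<^sup>2 / (real i)\<^sup>2 \<le> (if i \<le> a then 1 else y\<^sup>2 * (1 / (real i)\<^sup>2))"
    proof (cases "i \<le> a")
      case True
      have "(min y (real i))\<^sup>2 \<le> (real i)\<^sup>2" using y by (intro power_mono) auto
      then show ?thesis using True i by (simp add: divide_le_eq_1)
    next
      case False
      then have "min y (real i) = y" using ay by simp
      then show ?thesis using False by simp
    qed
  qed
  also have "\<dots> = (\<Sum>i\<in>{1..N} \<inter> {i. i \<le> a}. 1) + (\<Sum>i\<in>{1..N} \<inter> - {i. i \<le> a}. y\<^sup>2 * (1 / (real i)\<^sup>2))"
    by (rule sum.If_cases) simp
  also have "\<dots> \<le> real a + y\<^sup>2 * (2 / (real a + 1))"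
  proof (rule add_mono)
    have "{1..N} \<inter> {i. i \<le> a} \<subseteq> {1..a}" by auto
    then have "card ({1..N} \<inter> {i. i \<le> a}) \<le> card {1..a}" by (intro card_mono) auto
    then show "(\<Sum>i\<in>{1..N} \<inter> {i. i \<le> a}. 1) \<le> real a" by simp
    have "{1..N} \<inter> - {i. i \<le> a} = {Suc a..N}" by auto
    then have "(\<Sum>i\<in>{1..N} \<inter> - {i. i \<le> a}. y\<^sup>2 * (1 / (real i)\<^sup>2)) = y\<^sup>2 * (\<Sum>i\<in>{Suc a..N}. 1 / (real i)\<^sup>2)"
      by (simp add: sum_distrib_left)
    also have "\<dots> \<le> y\<^sup>2 * (2 / (real a + 1))" by (intro mult_left_mono tail_inv_sq) auto
    finally show "(\<Sum>i\<in>{1..N} \<inter> - {i. i \<le> a}. y\<^sup>2 * (1 / (real i)\<^sup>2)) \<le> y\<^sup>2 * (2 / (real a + 1))" .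
  qed
  also have "\<dots> \<le> y + 2 * y"
  proof -
    have "y\<^sup>2 \<le> y * (real a + 1)" using ay y by (simp add: power2_eq_square mult_left_mono less_imp_le)
    then have "y\<^sup>2 * (2 / (real a + 1)) \<le> 2 * y" by (simp add: field_simps)
    then show ?thesis using ay by simp
  qed
  finally show ?thesis by simp
qed

lemma count_le:
  fixes y :: real
  assumes "0 \<le> y"
  shows "(\<Sum>n<N. if real (Suc n) < y then 1 else 0) \<le> y"
proof -
  have "(\<Sum>n<N. if real (Suc n) < y then 1 else (0::real)) = real (card {n\<in>{..<N}. real (Suc n) < y})"
    by (simp add: sum.If_cases Int_def lessThan_def)
  also have "card {n\<in>{..<N}. real (Suc n) < y} \<le> card {..<nat \<lfloor>y\<rfloor>}"
  proof (rule card_mono)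
    show "{n\<in>{..<N}. real (Suc n) < y} \<subseteq> {..<nat \<lfloor>y\<rfloor>}"
    proof
      fix n assume "n \<in> {n\<in>{..<N}. real (Suc n) < y}"
      then have "real (Suc n) < y" by simp
      then have "real n < real (nat \<lfloor>y\<rfloor>)" using assms by linarith
      then show "n \<in> {..<nat \<lfloor>y\<rfloor>}" by simp
    qed
  qed simp
  then have "real (card {n\<in>{..<N}. real (Suc n) < y}) \<le> real (nat \<lfloor>y\<rfloor>)" by simp
  also have "\<dots> \<le> y" using assms by linarith
  finally show ?thesis .
qed

lemma count_ge:
  fixes y :: real
  assumes "y \<le> real N"
  shows "y \<le> 1 + (\<Sum>n<N. if real (Suc n) < y then 1 else 0)"
proof (cases "y \<le> 1")
  case True
  have "0 \<le> (\<Sum>n<N. if real (Suc n) < y then 1 else (0::real))" by (rule sum_nonneg) auto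
  then show ?thesis using True by linarith
next
  case False
  define k where "k = nat \<lceil>y\<rceil> - 1"
  have k: "real k < y" "y \<le> real k + 1" "k \<le> N"
    unfolding k_def using False assms by (auto simp: of_nat_diff) linarith+
  have sub: "{..<k} \<subseteq> {n\<in>{..<N}. real (Suc n) < y}"
  proof
    fix n assume "n \<in> {..<k}"
    then have "Suc n \<le> k" by simp
    then show "n \<in> {n\<in>{..<N}. real (Suc n) < y}" using k by auto
  qed
  have "(\<Sum>n<N. if real (Suc n) < y then 1 else (0::real)) = real (card {n\<in>{..<N}. real (Suc n) < y})"
    by (simp add: sum.If_cases Int_def lessThan_def)
  also have "\<dots> \<ge> real (card {..<k})" using card_mono[OF _ sub] by simp
  finally show ?thesis using k by simp
qed

lemma sum_swap_level:
  fixes w :: "'m \<Rightarrow> real" and e :: "'x \<Rightarrow> real"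
  assumes "finite A" "finite B"
  shows "(\<Sum>m\<in>A. w m * (\<Sum>x\<in>{x\<in>B. P m x}. e x)) = (\<Sum>x\<in>B. e x * (\<Sum>m\<in>{m\<in>A. P m x}. w m))"
proof -
  have "(\<Sum>m\<in>A. w m * (\<Sum>x\<in>{x\<in>B. P m x}. e x)) = (\<Sum>m\<in>A. \<Sum>x\<in>B. if P m x then w m * e x else 0)"
    using assms by (simp add: sum_distrib_left sum.inter_filter[symmetric])
  also have "\<dots> = (\<Sum>x\<in>B. \<Sum>m\<in>A. if P m x then w m * e x else 0)" by (rule sum.swap)
  also have "\<dots> = (\<Sum>x\<in>B. e x * (\<Sum>m\<in>{m\<in>A. P m x}. w m))"
    using assms by (simp add: sum_distrib_left sum.inter_filter[symmetric] mult.commute)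
  finally show ?thesis .
qed

definition covar :: "'a measure \<Rightarrow> ('a \<Rightarrow> real) \<Rightarrow> ('a \<Rightarrow> real) \<Rightarrow> real" where
  "covar M f g = (\<integral>x. f x * g x \<partial>M) - (\<integral>x. f x \<partial>M) * (\<integral>x. g x \<partial>M)"

context prob_space begin

lemma covar_centered:
  assumes "integrable M f" "integrable M g" "integrable M (\<lambda>x. f x * g x)"
  shows "expectation (\<lambda>x. (f x - expectation f) * (g x - expectation g)) = covar M f g"
proof -
  have "(\<lambda>x. (f x - expectation f) * (g x - expectation g)) =
        (\<lambda>x. f x * g x - expectation g * f x - expectation f * g x + expectation f * expectation g)"
    by (auto simp: fun_eq_iff algebra_simps)
  then have "expectation (\<lambda>x. (f x - expectation f) * (g x - expectation g)) =
     expectation (\<lambda>x. f x * g x) - expectation g * expectation f - expectation f * expectation g + expectation f * expectation g"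
    using assms by (simp add: prob_space)
  then show ?thesis unfolding covar_def by simp
qed

lemma var_sum:
  assumes fin: "finite I" and m[measurable]: "\<And>i. i \<in> I \<Longrightarrow> f i \<in> borel_measurable M"
    and b: "\<And>i x. i \<in> I \<Longrightarrow> x \<in> space M \<Longrightarrow> \<bar>f i x\<bar> \<le> B"
  shows "variance (\<lambda>x. \<Sum>i\<in>I. f i x) = (\<Sum>i\<in>I. \<Sum>j\<in>I. covar M (f i) (f j))"
proof -
  have int: "integrable M (f i)" if "i \<in> I" for i
    by (rule integrable_bounded_rv[where B=B]) (use that b in auto)
  have intp: "integrable M (\<lambda>x. f i x * f j x)" if "i \<in> I" "j \<in> I" for i j
  proof (rule integrable_bounded_rv[where B="B * B"])
    show "(\<lambda>x. f i x * f j x) \<in> borel_measurable M" using that by measurable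
    fix x assume "x \<in> space M"
    then show "\<bar>f i x * f j x\<bar> \<le> B * B" using b[of i x] b[of j x] that
      by (simp add: abs_mult mult_mono')
  qed
  let ?e = "\<lambda>i. expectation (f i)"
  have ES: "expectation (\<lambda>x. \<Sum>i\<in>I. f i x) = (\<Sum>i\<in>I. ?e i)"
    by (rule Bochner_Integration.integral_sum) (use int in auto)
  have cint: "integrable M (\<lambda>x. (f i x - ?e i) * (f j x - ?e j))" if "i \<in> I" "j \<in> I" for i j
  proof -
    have "(\<lambda>x. (f i x - ?e i) * (f j x - ?e j)) = (\<lambda>x. f i x * f j x - ?e j * f i x - ?e i * f j x + ?e i * ?e j)"
      by (auto simp: fun_eq_iff algebra_simps)
    then show ?thesis using int intp that by simp
  qed
  have "variance (\<lambda>x. \<Sum>i\<in>I. f i x) = expectation (\<lambda>x. (\<Sum>i\<in>I. f i x - ?e i)\<^sup>2)"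
    unfolding ES by (simp add: sum_subtractf)
  also have "\<dots> = expectation (\<lambda>x. \<Sum>i\<in>I. \<Sum>j\<in>I. (f i x - ?e i) * (f j x - ?e j))"
    by (simp add: power2_eq_square sum_product)
  also have "\<dots> = (\<Sum>i\<in>I. \<Sum>j\<in>I. expectation (\<lambda>x. (f i x - ?e i) * (f j x - ?e j)))"
    using cint by (simp add: Bochner_Integration.integral_sum)
  also have "\<dots> = (\<Sum>i\<in>I. \<Sum>j\<in>I. covar M (f i) (f j))"
    using int intp by (intro sum.cong refl covar_centered) auto
  finally show ?thesis .
qed

end

lemma double_sum_split:
  fixes c :: "nat \<Rightarrow> nat \<Rightarrow> real"
  assumes fin: "finite I" and sym: "\<And>i j. c i j = c j i"
  shows "(\<Sum>i\<in>I. \<Sum>j\<in>I. c i j) = (\<Sum>i\<in>I. c i i) + 2 * (\<Sum>p\<in>{p\<in>I \<times> I. fst p < snd p}. c (fst p) (snd p))"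
proof -
  let ?U = "{p\<in>I \<times> I. fst p < snd p}" and ?L = "{p\<in>I \<times> I. snd p < fst p}" and ?D = "{p\<in>I \<times> I. fst p = snd p}"
  have "(\<Sum>i\<in>I. \<Sum>j\<in>I. c i j) = (\<Sum>p\<in>I \<times> I. c (fst p) (snd p))"
    by (simp add: sum.cartesian_product case_prod_beta)
  also have "I \<times> I = ?D \<union> (?U \<union> ?L)" by auto
  also have "(\<Sum>p\<in>?D \<union> (?U \<union> ?L). c (fst p) (snd p)) = (\<Sum>p\<in>?D. c (fst p) (snd p)) + ((\<Sum>p\<in>?U. c (fst p) (snd p)) + (\<Sum>p\<in>?L. c (fst p) (snd p)))"
    using fin by (subst sum.union_disjoint, auto, subst sum.union_disjoint, auto)
  also have "(\<Sum>p\<in>?D. c (fst p) (snd p)) = (\<Sum>i\<in>I. c i i)"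
  proof -
    have "?D = (\<lambda>i. (i, i)) ` I" by auto
    then show ?thesis by (simp add: sum.reindex inj_on_def)
  qed
  also have "(\<Sum>p\<in>?L. c (fst p) (snd p)) = (\<Sum>p\<in>?U. c (fst p) (snd p))"
  proof -
    have "?L = prod.swap ` ?U" by (auto simp: image_iff)
    then have "(\<Sum>p\<in>?L. c (fst p) (snd p)) = (\<Sum>p\<in>?U. c (snd p) (fst p))"
      by (simp add: sum.reindex inj_on_def)
    also have "\<dots> = (\<Sum>p\<in>?U. c (fst p) (snd p))" using sym by simp
    finally show ?thesis .
  qed
  finally show ?thesis by simp
qed

context prob_space begin

lemma subseq_conv:
  fixes T :: "nat \<Rightarrow> 'a \<Rightarrow> real"
  assumes Tm[measurable]: "\<And>i. T i \<in> borel_measurable M"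
    and Tb: "\<And>i \<omega>. \<omega> \<in> space M \<Longrightarrow> 0 \<le> T i \<omega> \<and> T i \<omega> \<le> real i"
    and e2: "\<And>N. (\<Sum>i=1..N. expectation (\<lambda>\<omega>. (T i \<omega>)\<^sup>2) / (real i)\<^sup>2) \<le> E2"
    and c0: "\<And>i j. 1 \<le> i \<Longrightarrow> i < j \<Longrightarrow> 0 \<le> covar M (T i) (T j)"
    and cC: "\<And>F. finite F \<Longrightarrow> F \<subseteq> {(i,j). 1 \<le> i \<and> i < j} \<Longrightarrow>
               (\<Sum>(i,j)\<in>F. covar M (T i) (T j) / (real i * real j)) \<le> C"
    and a: "1 < \<alpha>"
  shows "AE \<omega> in M. (\<lambda>m. ((\<Sum>i=1..kseq \<alpha> m. T i \<omega>) - expectation (\<lambda>\<omega>. \<Sum>i=1..kseq \<alpha> m. T i \<omega>)) / real (kseq \<alpha> m)) \<longlonglongrightarrow> 0"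
proof -
  let ?K = "kseq \<alpha>"
  define D where "D = 4 * \<alpha>\<^sup>2 / (\<alpha>\<^sup>2 - 1)"
  have D0: "0 \<le> D" unfolding D_def using a by (simp add: one_less_power less_imp_le)
  define S where "S N \<omega> = (\<Sum>i=1..N. T i \<omega>)" for N \<omega>
  have Seq: "S N = (\<lambda>\<omega>. \<Sum>i=1..N. T i \<omega>)" for N by (simp add: S_def fun_eq_iff)
  have Sm[measurable]: "S N \<in> borel_measurable M" for N unfolding S_def by measurable
  define V where "V N = variance (S N)" for N
  define e where "e i = expectation (\<lambda>\<omega>. (T i \<omega>)\<^sup>2)" for i
  define U where "U N = {p\<in>{1..N} \<times> {1..N}. fst p < snd p}" for N :: nat
  define c where "c i j = covar M (T i) (T j)" for i j :: nat
  have csym: "c i j = c j i" for i j unfolding c_def covar_def by (simp add: mult.commute)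
  have cii: "c i i \<le> e i" for i
    unfolding c_def e_def covar_def by (simp add: power2_eq_square)
  have e0: "0 \<le> e i" for i unfolding e_def by simp
  have V_bound: "V N \<le> (\<Sum>i=1..N. e i) + 2 * (\<Sum>p\<in>U N. c (fst p) (snd p))" for N
  proof -
    have "V N = (\<Sum>i\<in>{1..N}. \<Sum>j\<in>{1..N}. c i j)"
      unfolding V_def S_def c_def
    proof (rule var_sum[where B="real N"])
      fix i \<omega> assume "i \<in> {1..N}" "\<omega> \<in> space M"
      then show "\<bar>T i \<omega>\<bar> \<le> real N" using Tb[of \<omega> i] by auto
    qed auto
    also have "\<dots> = (\<Sum>i\<in>{1..N}. c i i) + 2 * (\<Sum>p\<in>U N. c (fst p) (snd p))"
      unfolding U_def by (rule double_sum_split) (auto simp: csym)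
    also have "\<dots> \<le> (\<Sum>i=1..N. e i) + 2 * (\<Sum>p\<in>U N. c (fst p) (snd p))"
      by (intro add_right_mono sum_mono cii)
    finally show ?thesis .
  qed
  have V0: "0 \<le> V N" for N unfolding V_def by (rule variance_positive)
  define w where "w m = 1 / (real (?K m))\<^sup>2" for m
  have w0: "0 \<le> w m" for m unfolding w_def by simp
  have Kpos: "1 \<le> ?K m" for m using kseq_ge1[of \<alpha> m] a by simp
  have wsum: "(\<Sum>m\<in>{m\<in>{..<L}. i \<le> ?K m}. w m) \<le> D / (real i)\<^sup>2" if "1 \<le> i" for i L
  proof -
    have "{m\<in>{..<L}. i \<le> ?K m} = {m. m < L \<and> i \<le> ?K m}" by auto
    then show ?thesis unfolding w_def D_def using kseq_sum_bound[OF a that, of L] by simp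
  qed
  have partial: "(\<Sum>m<L. V (?K m) / (real (?K m))\<^sup>2) \<le> D * E2 + 2 * (D * C)" for L
  proof -
    define KM where "KM = ?K L"
    have KmKM: "m < L \<Longrightarrow> ?K m \<le> KM" for m unfolding KM_def using kseq_mono[of \<alpha> m L] a by simp
    have A: "(\<Sum>m<L. w m * (\<Sum>i=1..?K m. e i)) \<le> D * E2"
    proof -
      have eqA: "(\<Sum>i=1..?K m. e i) = (\<Sum>i\<in>{i\<in>{1..KM}. i \<le> ?K m}. e i)" if "m < L" for m
      proof -
        have "{1..?K m} = {i\<in>{1..KM}. i \<le> ?K m}" using KmKM[OF that] by auto
        then show ?thesis by simp
      qed
      have "(\<Sum>m<L. w m * (\<Sum>i=1..?K m. e i)) = (\<Sum>m\<in>{..<L}. w m * (\<Sum>i\<in>{i\<in>{1..KM}. i \<le> ?K m}. e i))"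
        using eqA by simp
      also have "\<dots> = (\<Sum>i\<in>{1..KM}. e i * (\<Sum>m\<in>{m\<in>{..<L}. i \<le> ?K m}. w m))"
        by (rule sum_swap_level) auto
      also have "\<dots> \<le> (\<Sum>i\<in>{1..KM}. e i * (D / (real i)\<^sup>2))"
        by (intro sum_mono mult_left_mono wsum e0) auto
      also have "\<dots> = D * (\<Sum>i=1..KM. e i / (real i)\<^sup>2)"
        by (simp add: sum_distrib_left field_simps)
      also have "\<dots> \<le> D * E2" unfolding e_def by (intro mult_left_mono e2 D0)
      finally show ?thesis .
    qed
    have B: "(\<Sum>m<L. w m * (\<Sum>p\<in>U (?K m). c (fst p) (snd p))) \<le> D * C"
    proof -
      have eqB: "(\<Sum>p\<in>U (?K m). c (fst p) (snd p)) = (\<Sum>p\<in>{p\<in>U KM. snd p \<le> ?K m}. c (fst p) (snd p))" if "m < L" for m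
      proof -
        have "U (?K m) = {p\<in>U KM. snd p \<le> ?K m}" using KmKM[OF that] unfolding U_def by auto
        then show ?thesis by simp
      qed
      have finU: "finite (U N)" for N unfolding U_def by auto
      have "(\<Sum>m<L. w m * (\<Sum>p\<in>U (?K m). c (fst p) (snd p))) = (\<Sum>m\<in>{..<L}. w m * (\<Sum>p\<in>{p\<in>U KM. snd p \<le> ?K m}. c (fst p) (snd p)))"
        using eqB by simp
      also have "\<dots> = (\<Sum>p\<in>U KM. c (fst p) (snd p) * (\<Sum>m\<in>{m\<in>{..<L}. snd p \<le> ?K m}. w m))"
        by (rule sum_swap_level) (auto simp: finU)
      also have "\<dots> \<le> (\<Sum>p\<in>U KM. c (fst p) (snd p) * (D / (real (snd p))\<^sup>2))"
      proof (intro sum_mono mult_left_mono wsum)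
        fix p assume p: "p \<in> U KM"
        then show "0 \<le> c (fst p) (snd p)" unfolding c_def U_def by (intro c0) auto
        show "1 \<le> snd p" using p unfolding U_def by auto
      qed
      also have "\<dots> \<le> (\<Sum>p\<in>U KM. D * (c (fst p) (snd p) / (real (fst p) * real (snd p))))"
      proof (intro sum_mono)
        fix p assume p: "p \<in> U KM"
        then have p1: "1 \<le> fst p" "fst p < snd p" unfolding U_def by auto
        have cp: "0 \<le> c (fst p) (snd p)" unfolding c_def using p1 by (intro c0) auto
        have "real (fst p) * real (snd p) \<le> (real (snd p))\<^sup>2" using p1 by (simp add: power2_eq_square mult_right_mono)
        then have "1 / (real (snd p))\<^sup>2 \<le> 1 / (real (fst p) * real (snd p))"
          using p1 by (intro divide_left_mono) auto
        then have "c (fst p) (snd p) * (D * (1 / (real (snd p))\<^sup>2)) \<le> c (fst p) (snd p) * (D * (1 / (real (fst p) * real (snd p))))"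
          using cp D0 by (intro mult_left_mono) auto
        then show "c (fst p) (snd p) * (D / (real (snd p))\<^sup>2) \<le> D * (c (fst p) (snd p) / (real (fst p) * real (snd p)))"
          by (simp add: field_simps)
      qed
      also have "\<dots> = D * (\<Sum>p\<in>U KM. c (fst p) (snd p) / (real (fst p) * real (snd p)))"
        by (simp add: sum_distrib_left)
      also have "\<dots> \<le> D * C"
      proof (intro mult_left_mono D0)
        have "(\<Sum>p\<in>U KM. c (fst p) (snd p) / (real (fst p) * real (snd p))) = (\<Sum>(i,j)\<in>U KM. covar M (T i) (T j) / (real i * real j))"
          unfolding c_def by (simp add: case_prod_beta)
        also have "\<dots> \<le> C" by (rule cC) (auto simp: finU U_def)
        finally show "(\<Sum>p\<in>U KM. c (fst p) (snd p) / (real (fst p) * real (snd p))) \<le> C" .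
      qed
      finally show ?thesis .
    qed
    have "(\<Sum>m<L. V (?K m) / (real (?K m))\<^sup>2) \<le> (\<Sum>m<L. w m * ((\<Sum>i=1..?K m. e i) + 2 * (\<Sum>p\<in>U (?K m). c (fst p) (snd p))))"
      by (intro sum_mono) (use V_bound w0 in \<open>auto simp: w_def field_simps intro: divide_right_mono\<close>)
    also have "\<dots> = (\<Sum>m<L. w m * (\<Sum>i=1..?K m. e i)) + 2 * (\<Sum>m<L. w m * (\<Sum>p\<in>U (?K m). c (fst p) (snd p)))"
      by (simp add: distrib_left sum.distrib sum_distrib_left mult.left_commute)
    also have "\<dots> \<le> D * E2 + 2 * (D * C)" using A B by simp
    finally show ?thesis .
  qed
  have summV: "summable (\<lambda>m. V (?K m) / (real (?K m))\<^sup>2)"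
    by (rule summableI_nonneg_bounded[where x="D * E2 + 2 * (D * C)"]) (use V0 partial in auto)
  have AEq: "AE \<omega> in M. eventually (\<lambda>m. \<bar>(S (?K m) \<omega> - expectation (S (?K m))) / real (?K m)\<bar> < 1 / real (Suc q)) sequentially" for q
  proof -
    define \<epsilon> where "\<epsilon> = 1 / real (Suc q)"
    have \<epsilon>0: "0 < \<epsilon>" unfolding \<epsilon>_def by simp
    define A where "A m = {\<omega>\<in>space M. \<epsilon> * real (?K m) \<le> \<bar>S (?K m) \<omega> - expectation (S (?K m))\<bar>}" for m
    have Am[measurable]: "A m \<in> sets M" for m unfolding A_def by measurable
    have PA: "prob (A m) \<le> (1 / \<epsilon>\<^sup>2) * (V (?K m) / (real (?K m))\<^sup>2)" for m
    proof -
      have sq: "integrable M (\<lambda>x. (S (?K m) x)\<^sup>2)"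
      proof (rule integrable_bounded_rv[where B="(real (?K m) * real (?K m))\<^sup>2"])
        fix x assume x: "x \<in> space M"
        have "\<bar>S (?K m) x\<bar> \<le> real (?K m) * real (?K m)"
        proof -
          have "\<bar>S (?K m) x\<bar> \<le> (\<Sum>i=1..?K m. \<bar>T i x\<bar>)" unfolding S_def by (rule sum_abs)
          also have "\<dots> \<le> (\<Sum>i=1..?K m. real (?K m))" 
          proof (intro sum_mono)
            fix i assume "i \<in> {1..?K m}"
            then show "\<bar>T i x\<bar> \<le> real (?K m)" using Tb[OF x, of i] by auto
          qed
          also have "\<dots> = real (?K m) * real (?K m)" by simp
          finally show ?thesis .
        qed
        then show "\<bar>(S (?K m) x)\<^sup>2\<bar> \<le> (real (?K m) * real (?K m))\<^sup>2"
          using abs_le_square_iff[of "S (?K m) x" "real (?K m) * real (?K m)"] by simp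
      qed simp
      have "prob (A m) \<le> variance (S (?K m)) / (\<epsilon> * real (?K m))\<^sup>2"
        unfolding A_def by (rule Chebyshev_inequality) (use sq \<epsilon>0 Kpos[of m] in auto)
      also have "\<dots> = (1 / \<epsilon>\<^sup>2) * (V (?K m) / (real (?K m))\<^sup>2)"
        unfolding V_def by (simp add: power_mult_distrib)
      finally show ?thesis .
    qed
    have "summable (\<lambda>m. measure M (A m))"
      by (rule summable_comparison_test'[where N=0, OF summable_mult[OF summV, of "1/\<epsilon>\<^sup>2"]]) (use PA in auto)
    then have "AE \<omega> in M. eventually (\<lambda>m. \<omega> \<in> space M - A m) sequentially"
      by (intro borel_cantelli_AE1) (auto simp: emeasure_eq_measure)
    then show ?thesis
    proof (rule eventually_mono)
      fix \<omega> assume "eventually (\<lambda>m. \<omega> \<in> space M - A m) sequentially"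
      then show "eventually (\<lambda>m. \<bar>(S (?K m) \<omega> - expectation (S (?K m))) / real (?K m)\<bar> < 1 / real (Suc q)) sequentially"
      proof (rule eventually_mono)
        fix m assume "\<omega> \<in> space M - A m"
        then have "\<bar>S (?K m) \<omega> - expectation (S (?K m))\<bar> < \<epsilon> * real (?K m)" unfolding A_def by auto
        then show "\<bar>(S (?K m) \<omega> - expectation (S (?K m))) / real (?K m)\<bar> < 1 / real (Suc q)"
          using Kpos[of m] unfolding \<epsilon>_def by (simp add: abs_divide field_simps)
      qed
    qed
  qed
  then have "AE \<omega> in M. \<forall>q. eventually (\<lambda>m. \<bar>(S (?K m) \<omega> - expectation (S (?K m))) / real (?K m)\<bar> < 1 / real (Suc q)) sequentially"
    by (subst AE_all_countable) auto
  then show ?thesis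
  proof (rule eventually_mono)
    fix \<omega> assume H: "\<forall>q. eventually (\<lambda>m. \<bar>(S (?K m) \<omega> - expectation (S (?K m))) / real (?K m)\<bar> < 1 / real (Suc q)) sequentially"
    show "(\<lambda>m. ((\<Sum>i=1..?K m. T i \<omega>) - expectation (\<lambda>\<omega>. \<Sum>i=1..?K m. T i \<omega>)) / real (?K m)) \<longlonglongrightarrow> 0"
    proof (rule tendstoI)
      fix r :: real assume r: "0 < r"
      obtain q where q: "1 / real (Suc q) < r" using reals_Archimedean[OF r] by (auto simp: inverse_eq_divide)
      from H[rule_format, of q] show "eventually (\<lambda>m. dist (((\<Sum>i=1..?K m. T i \<omega>) - expectation (\<lambda>\<omega>. \<Sum>i=1..?K m. T i \<omega>)) / real (?K m)) 0 < r) sequentially"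
        by (rule eventually_mono) (use q in \<open>auto simp: Seq dist_real_def\<close>)
    qed
  qed
qed

end

lemma kseq_filterlim: "1 < \<alpha> \<Longrightarrow> filterlim (kseq \<alpha>) at_top sequentially"
  unfolding filterlim_at_top
proof
  fix Z :: nat assume a: "1 < \<alpha>"
  obtain m0 where "\<forall>m\<ge>m0. real Z \<le> real (kseq \<alpha> m)" using kseq_large[OF a] by blast
  then show "eventually (\<lambda>m. Z \<le> kseq \<alpha> m) sequentially"
    unfolding eventually_sequentially by auto
qed

lemma eventually_eq_avg:
  fixes y t :: "nat \<Rightarrow> real"
  assumes "eventually (\<lambda>n. y n = t n) sequentially"
  shows "(\<lambda>N. ((\<Sum>i=1..N. y i) - (\<Sum>i=1..N. t i)) / real N) \<longlonglongrightarrow> 0"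
proof -
  obtain n0 where n0: "\<And>n. n \<ge> n0 \<Longrightarrow> y n = t n" using assms unfolding eventually_sequentially by auto
  define c where "c = (\<Sum>i=1..n0. y i - t i)"
  have "eventually (\<lambda>N. c / real N = ((\<Sum>i=1..N. y i) - (\<Sum>i=1..N. t i)) / real N) sequentially"
    unfolding eventually_sequentially
  proof (intro exI allI impI)
    fix N assume N: "N \<ge> n0"
    have "(\<Sum>i=1..N. y i) - (\<Sum>i=1..N. t i) = (\<Sum>i=1..N. y i - t i)" by (simp add: sum_subtractf)
    also have "\<dots> = (\<Sum>i=1..n0. y i - t i)"
    proof (rule sum.mono_neutral_right)
      show "\<forall>i\<in>{1..N} - {1..n0}. y i - t i = 0" using n0 by auto
    qed (use N in auto)
    finally show "c / real N = ((\<Sum>i=1..N. y i) - (\<Sum>i=1..N. t i)) / real N" unfolding c_def by simp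
  qed
  then show ?thesis using lim_const_over_n[of c] by (rule Lim_transform_eventually[rotated])
qed

context prob_space begin

lemma ident_integral:
  fixes A B :: "'a \<Rightarrow> real" and h :: "real \<Rightarrow> real"
  assumes [measurable]: "A \<in> borel_measurable M" "B \<in> borel_measurable M" "h \<in> borel_measurable borel"
    and d: "distr M borel A = distr M borel B"
  shows "expectation (\<lambda>\<omega>. h (A \<omega>)) = expectation (\<lambda>\<omega>. h (B \<omega>))"
  using integral_distr[of A M borel h] integral_distr[of B M borel h] d by simp

lemma ident_prob:
  fixes A B :: "'a \<Rightarrow> real"
  assumes [measurable]: "A \<in> borel_measurable M" "B \<in> borel_measurable M" "S \<in> sets borel"
    and d: "distr M borel A = distr M borel B"
  shows "prob {\<omega>\<in>space M. A \<omega> \<in> S} = prob {\<omega>\<in>space M. B \<omega> \<in> S}"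
proof -
  have "prob {\<omega>\<in>space M. A \<omega> \<in> S} = measure (distr M borel A) S"
    by (subst measure_distr) (auto intro!: arg_cong[where f="measure M"])
  also have "\<dots> = measure (distr M borel B) S" using d by simp
  also have "\<dots> = prob {\<omega>\<in>space M. B \<omega> \<in> S}"
    by (subst measure_distr) (auto intro!: arg_cong[where f="measure M"])
  finally show ?thesis .
qed

lemma etemadi:
  fixes Y :: "nat \<Rightarrow> 'a \<Rightarrow> real"
  assumes Ym[measurable]: "\<And>n. Y n \<in> borel_measurable M"
    and Y0: "\<And>n \<omega>. \<omega> \<in> space M \<Longrightarrow> 0 \<le> Y n \<omega>"
    and Yd: "\<And>n. distr M borel (Y n) = distr M borel (Y 1)"
    and Yi: "integrable M (Y 1)"
    and c0: "\<And>i j. 1 \<le> i \<Longrightarrow> i < j \<Longrightarrow> 0 \<le> covar M (\<lambda>\<omega>. min (Y i \<omega>) (real i)) (\<lambda>\<omega>. min (Y j \<omega>) (real j))"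
    and cC: "\<And>F. finite F \<Longrightarrow> F \<subseteq> {(i,j). 1 \<le> i \<and> i < j} \<Longrightarrow>
               (\<Sum>(i,j)\<in>F. covar M (\<lambda>\<omega>. min (Y i \<omega>) (real i)) (\<lambda>\<omega>. min (Y j \<omega>) (real j)) / (real i * real j)) \<le> C"
  shows "AE \<omega> in M. (\<lambda>n. (\<Sum>i=1..n. Y i \<omega>) / real n) \<longlonglongrightarrow> expectation (Y 1)"
proof -
  define T where "T i \<omega> = min (Y i \<omega>) (real i)" for i \<omega>
  have Teq: "T i = (\<lambda>\<omega>. min (Y i \<omega>) (real i))" for i by (simp add: T_def fun_eq_iff)
  define \<mu> where "\<mu> = expectation (Y 1)"
  have Tm[measurable]: "T i \<in> borel_measurable M" for i unfolding Teq by measurable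
  have Tb: "0 \<le> T i \<omega> \<and> T i \<omega> \<le> real i" if "\<omega> \<in> space M" for i \<omega>
    unfolding T_def using Y0[OF that] by auto
  have ET: "expectation (T i) = expectation (\<lambda>\<omega>. min (Y 1 \<omega>) (real i))" for i
    unfolding Teq by (rule ident_integral[OF Ym Ym _ Yd]) measurable
  have ET2: "expectation (\<lambda>\<omega>. (T i \<omega>)\<^sup>2) = expectation (\<lambda>\<omega>. (min (Y 1 \<omega>) (real i))\<^sup>2)" for i
    unfolding T_def by (rule ident_integral[OF Ym Ym _ Yd, where h="\<lambda>y. (min y (real i))\<^sup>2"]) measurable
  have intmin2: "integrable M (\<lambda>\<omega>. (min (Y 1 \<omega>) (real i))\<^sup>2 / (real i)\<^sup>2)" for i
  proof (rule integrable_bounded_rv[where B=1])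
    fix \<omega> assume "\<omega> \<in> space M"
    then have "0 \<le> Y 1 \<omega>" by (rule Y0)
    then have "(min (Y 1 \<omega>) (real i))\<^sup>2 \<le> (real i)\<^sup>2" by (intro power_mono) auto
    then show "\<bar>(min (Y 1 \<omega>) (real i))\<^sup>2 / (real i)\<^sup>2\<bar> \<le> 1"
      by (cases "i = 0") (auto simp: divide_le_eq_1)
  qed simp
  have e2: "(\<Sum>i=1..N. expectation (\<lambda>\<omega>. (T i \<omega>)\<^sup>2) / (real i)\<^sup>2) \<le> 3 * \<mu>" for N
  proof -
    have "(\<Sum>i=1..N. expectation (\<lambda>\<omega>. (T i \<omega>)\<^sup>2) / (real i)\<^sup>2) = (\<Sum>i=1..N. expectation (\<lambda>\<omega>. (min (Y 1 \<omega>) (real i))\<^sup>2 / (real i)\<^sup>2))"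
      by (simp add: ET2)
    also have "\<dots> = expectation (\<lambda>\<omega>. \<Sum>i=1..N. (min (Y 1 \<omega>) (real i))\<^sup>2 / (real i)\<^sup>2)"
      by (rule Bochner_Integration.integral_sum[symmetric]) (use intmin2 in auto)
    also have "\<dots> \<le> expectation (\<lambda>\<omega>. 3 * Y 1 \<omega>)"
      by (rule integral_mono) (use intmin2 Yi Y0 sum_min_sq_bound in auto)
    also have "\<dots> = 3 * \<mu>" unfolding \<mu>_def by simp
    finally show ?thesis .
  qed
  define \<alpha> where "\<alpha> r = 1 + 1 / (real r + 1)" for r :: nat
  have a1: "1 < \<alpha> r" for r unfolding \<alpha>_def by simp
  have sub: "AE \<omega> in M. (\<lambda>m. ((\<Sum>i=1..kseq (\<alpha> r) m. T i \<omega>) - expectation (\<lambda>\<omega>. \<Sum>i=1..kseq (\<alpha> r) m. T i \<omega>)) / real (kseq (\<alpha> r) m)) \<longlonglongrightarrow> 0" for r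
    by (rule subseq_conv[OF Tm Tb e2 _ _ a1]) (use c0 cC in \<open>auto simp: Teq\<close>)
  have ES: "expectation (\<lambda>\<omega>. \<Sum>i=1..N. T i \<omega>) = (\<Sum>i=1..N. expectation (T i))" for N
  proof (rule Bochner_Integration.integral_sum)
    fix i assume "i \<in> {1..N}"
    show "integrable M (T i)" by (rule integrable_bounded_rv[where B="real i"]) (use Tb in auto)
  qed
  have ETlim: "(\<lambda>i. expectation (T i)) \<longlonglongrightarrow> \<mu>"
  proof -
    have "(\<lambda>i. expectation (\<lambda>\<omega>. min (Y 1 \<omega>) (real i))) \<longlonglongrightarrow> expectation (Y 1)"
    proof (rule integral_dominated_convergence[where w="Y 1"])
      show "AE x in M. (\<lambda>i. min (Y 1 x) (real i)) \<longlonglongrightarrow> Y 1 x"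
      proof (rule AE_I2)
        fix x
        obtain n0 :: nat where "Y 1 x \<le> real n0" using real_arch_simple by blast
        then have "eventually (\<lambda>i. min (Y 1 x) (real i) = Y 1 x) sequentially"
          unfolding eventually_sequentially by (intro exI[of _ n0]) auto
        then show "(\<lambda>i. min (Y 1 x) (real i)) \<longlonglongrightarrow> Y 1 x" by (rule tendsto_eventually)
      qed
      show "AE x in M. norm (min (Y 1 x) (real i)) \<le> Y 1 x" for i
        using Y0 by (intro AE_I2) (auto simp: abs_le_iff)
    qed (use Yi in auto)
    then show ?thesis unfolding ET \<mu>_def .
  qed
  have cesT: "(\<lambda>N. (\<Sum>i=1..N. expectation (T i)) / real N) \<longlonglongrightarrow> \<mu>" by (rule cesaro[OF ETlim])
  have trunc: "AE \<omega> in M. eventually (\<lambda>n. Y n \<omega> = T n \<omega>) sequentially"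
  proof -
    define A where "A n = {\<omega>\<in>space M. real (Suc n) < Y (Suc n) \<omega>}" for n
    have Am[measurable]: "A n \<in> sets M" for n unfolding A_def by measurable
    have PA: "prob (A n) = prob {\<omega>\<in>space M. real (Suc n) < Y 1 \<omega>}" for n
    proof -
      have "prob {\<omega>\<in>space M. Y (Suc n) \<omega> \<in> {real (Suc n)<..}} = prob {\<omega>\<in>space M. Y 1 \<omega> \<in> {real (Suc n)<..}}"
        by (rule ident_prob[OF Ym Ym _ Yd]) simp
      then show ?thesis unfolding A_def by simp
    qed
    have ind: "prob {\<omega>\<in>space M. real (Suc n) < Y 1 \<omega>} = expectation (\<lambda>\<omega>. if real (Suc n) < Y 1 \<omega> then 1 else 0)" for n
    proof -
      have "(\<lambda>\<omega>. if real (Suc n) < Y 1 \<omega> then 1 else 0 :: real) = indicator {\<omega>\<in>space M. real (Suc n) < Y 1 \<omega>}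
              \<or> True" by simp
      have "expectation (\<lambda>\<omega>. if real (Suc n) < Y 1 \<omega> then 1 else 0) = expectation (indicator {\<omega>\<in>space M. real (Suc n) < Y 1 \<omega>})"
        by (rule Bochner_Integration.integral_cong) (auto simp: indicator_def)
      also have "\<dots> = prob {\<omega>\<in>space M. real (Suc n) < Y 1 \<omega>}" by simp
      finally show ?thesis by simp
    qed
    have bnd: "(\<Sum>n<N. prob (A n)) \<le> \<mu>" for N
    proof -
      have iI: "integrable M (\<lambda>\<omega>. if real (Suc n) < Y 1 \<omega> then 1 else 0 :: real)" for n
        by (rule integrable_bounded_rv[where B=1]) auto
      have "(\<Sum>n<N. prob (A n)) = (\<Sum>n<N. expectation (\<lambda>\<omega>. if real (Suc n) < Y 1 \<omega> then 1 else 0))"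
        by (rule sum.cong[OF refl]) (rule trans[OF PA ind])
      also have "\<dots> = expectation (\<lambda>\<omega>. \<Sum>n<N. if real (Suc n) < Y 1 \<omega> then 1 else 0)"
        by (rule Bochner_Integration.integral_sum[symmetric]) (use iI in auto)
      also have "\<dots> \<le> expectation (Y 1)"
        by (rule integral_mono) (use iI Yi Y0 count_le in auto)
      finally show ?thesis unfolding \<mu>_def .
    qed
    have "summable (\<lambda>n. prob (A n))"
      by (rule summableI_nonneg_bounded[where x=\<mu>]) (use bnd in auto)
    then have "AE \<omega> in M. eventually (\<lambda>n. \<omega> \<in> space M - A n) sequentially"
      by (intro borel_cantelli_AE1) (auto simp: emeasure_eq_measure)
    then show ?thesis
    proof (rule eventually_mono)
      fix \<omega> assume "eventually (\<lambda>n. \<omega> \<in> space M - A n) sequentially"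
      then have "eventually (\<lambda>n. Y (Suc n) \<omega> = T (Suc n) \<omega>) sequentially"
        by (rule eventually_mono) (auto simp: A_def T_def)
      then show "eventually (\<lambda>n. Y n \<omega> = T n \<omega>) sequentially"
        using eventually_sequentially_Suc[of "\<lambda>n. Y n \<omega> = T n \<omega>"] by simp
    qed
  qed
  have "AE \<omega> in M. \<forall>r. (\<lambda>m. ((\<Sum>i=1..kseq (\<alpha> r) m. T i \<omega>) - expectation (\<lambda>\<omega>. \<Sum>i=1..kseq (\<alpha> r) m. T i \<omega>)) / real (kseq (\<alpha> r) m)) \<longlonglongrightarrow> 0"
    using sub by (subst AE_all_countable) auto
  with trunc AE_space show ?thesis
  proof (eventually_elim)
    case (elim \<omega>)
    note tr = elim(1) and sp = elim(2) and sb = elim(3)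
    show ?case unfolding \<mu>_def[symmetric]
    proof (rule interp[where s="\<lambda>N. \<Sum>i=1..N. Y i \<omega>"])
      show "(\<Sum>i=1..N. Y i \<omega>) \<le> (\<Sum>i=1..Suc N. Y i \<omega>)" for N
        using Y0[OF sp] by (simp add: sum.cl_ivl_Suc)
      show "0 \<le> (\<Sum>i=1..N. Y i \<omega>)" for N
        using Y0[OF sp] by (simp add: sum_nonneg)
      fix r :: nat
      let ?K = "kseq (\<alpha> r)"
      have Kf: "filterlim ?K at_top sequentially" by (rule kseq_filterlim[OF a1])
      have t1: "(\<lambda>m. ((\<Sum>i=1..?K m. Y i \<omega>) - (\<Sum>i=1..?K m. T i \<omega>)) / real (?K m)) \<longlonglongrightarrow> 0"
        using filterlim_compose[OF eventually_eq_avg[OF tr] Kf] .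
      have t2: "(\<lambda>m. ((\<Sum>i=1..?K m. T i \<omega>) - expectation (\<lambda>\<omega>. \<Sum>i=1..?K m. T i \<omega>)) / real (?K m)) \<longlonglongrightarrow> 0"
        using sb by simp
      have t3: "(\<lambda>m. expectation (\<lambda>\<omega>. \<Sum>i=1..?K m. T i \<omega>) / real (?K m)) \<longlonglongrightarrow> \<mu>"
        unfolding ES using filterlim_compose[OF cesT Kf] .
      have "(\<lambda>m. ((\<Sum>i=1..?K m. Y i \<omega>) - (\<Sum>i=1..?K m. T i \<omega>)) / real (?K m)
             + ((\<Sum>i=1..?K m. T i \<omega>) - expectation (\<lambda>\<omega>. \<Sum>i=1..?K m. T i \<omega>)) / real (?K m)
             + expectation (\<lambda>\<omega>. \<Sum>i=1..?K m. T i \<omega>) / real (?K m)) \<longlonglongrightarrow> 0 + 0 + \<mu>"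
        by (intro tendsto_add t1 t2 t3)
      moreover have "((\<Sum>i=1..?K m. Y i \<omega>) - (\<Sum>i=1..?K m. T i \<omega>)) / real (?K m)
             + ((\<Sum>i=1..?K m. T i \<omega>) - expectation (\<lambda>\<omega>. \<Sum>i=1..?K m. T i \<omega>)) / real (?K m)
             + expectation (\<lambda>\<omega>. \<Sum>i=1..?K m. T i \<omega>) / real (?K m) = (\<Sum>i=1..?K m. Y i \<omega>) / real (?K m)" for m
        by (simp add: diff_divide_distrib)
      ultimately show "(\<lambda>m. (\<Sum>i=1..kseq (1 + 1 / (real r + 1)) m. Y i \<omega>) / real (kseq (1 + 1 / (real r + 1)) m)) \<longlonglongrightarrow> \<mu>"
        unfolding \<alpha>_def by simp
    qed
  qed
qed

end

context prob_space begin

lemma frequently_pos: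
  fixes Z :: "nat \<Rightarrow> 'a \<Rightarrow> real"
  assumes Zm[measurable]: "\<And>n. Z n \<in> borel_measurable M"
    and Zb: "\<And>n \<omega>. \<omega> \<in> space M \<Longrightarrow> 0 \<le> Z n \<omega> \<and> Z n \<omega> \<le> 1"
    and div: "\<And>B. \<exists>N. B \<le> (\<Sum>n=1..N. expectation (Z n))"
    and cC: "\<And>N. (\<Sum>p\<in>{p\<in>{1..N} \<times> {1..N}. fst p < snd p}. covar M (Z (fst p)) (Z (snd p))) \<le> C"
  shows "AE \<omega> in M. \<forall>N. \<exists>n\<ge>N. 0 < Z n \<omega>"
proof -
  define S where "S N \<omega> = (\<Sum>n=1..N. Z n \<omega>)" for N \<omega>
  have Seq: "S N = (\<lambda>\<omega>. \<Sum>n=1..N. Z n \<omega>)" for N by (simp add: S_def fun_eq_iff)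
  have Sm[measurable]: "S N \<in> borel_measurable M" for N unfolding Seq by measurable
  define s where "s N = (\<Sum>n=1..N. expectation (Z n))" for N
  have iZ: "integrable M (Z n)" for n by (rule integrable_bounded_rv[where B=1]) (use Zb in \<open>auto simp: abs_le_iff\<close>)
  have ES: "expectation (S N) = s N" for N unfolding Seq s_def
    by (rule Bochner_Integration.integral_sum) (use iZ in auto)
  have s0: "0 \<le> s N" for N unfolding s_def by (intro sum_nonneg integral_nonneg_AE) (use Zb in auto)
  have VB: "variance (S N) \<le> s N + 2 * C" for N
  proof -
    let ?c = "\<lambda>i j. covar M (Z i) (Z j)"
    have "variance (S N) = (\<Sum>i\<in>{1..N}. \<Sum>j\<in>{1..N}. ?c i j)"
      unfolding Seq by (rule var_sum[where B=1]) (use Zb in \<open>auto simp: abs_le_iff\<close>)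
    also have "\<dots> = (\<Sum>i\<in>{1..N}. ?c i i) + 2 * (\<Sum>p\<in>{p\<in>{1..N} \<times> {1..N}. fst p < snd p}. ?c (fst p) (snd p))"
      by (rule double_sum_split) (auto simp: covar_def mult.commute)
    also have "\<dots> \<le> s N + 2 * C"
    proof (rule add_mono)
      show "(\<Sum>i\<in>{1..N}. ?c i i) \<le> s N" unfolding s_def
      proof (rule sum_mono)
        fix i
        have "?c i i \<le> expectation (\<lambda>\<omega>. Z i \<omega> * Z i \<omega>)" unfolding covar_def by simp
        also have "\<dots> \<le> expectation (Z i)"
        proof (rule integral_mono)
          show "integrable M (\<lambda>\<omega>. Z i \<omega> * Z i \<omega>)"
            by (rule integrable_bounded_rv[where B=1]) (use Zb in \<open>auto simp: abs_mult intro: mult_le_one\<close>)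
          fix \<omega> assume "\<omega> \<in> space M"
          then show "Z i \<omega> * Z i \<omega> \<le> Z i \<omega>" using Zb by (simp add: mult_left_le)
        qed (use iZ in auto)
        finally show "?c i i \<le> expectation (Z i)" .
      qed
    qed (use cC in auto)
    finally show ?thesis .
  qed
  define E where "E B = {\<omega>\<in>space M. \<forall>N. S N \<omega> \<le> real B}" for B :: nat
  have Em[measurable]: "E B \<in> sets M" for B unfolding E_def by measurable
  have PE: "prob (E B) \<le> e" if e: "0 < e" for B e
  proof -
    define K where "K = max (2 * real B + 1) (4 * (1 + 2 * \<bar>C\<bar>) / e + 1)"
    obtain N where N: "K \<le> s N" using div[of K] unfolding s_def by blast
    have sB: "2 * real B < s N" "s N > 0" using N unfolding K_def by auto
    have sK: "4 * (1 + 2 * \<bar>C\<bar>) / e < s N" using N unfolding K_def by auto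
    have sub: "E B \<subseteq> {\<omega>\<in>space M. s N - real B \<le> \<bar>S N \<omega> - expectation (S N)\<bar>}"
    proof
      fix x assume "x \<in> E B"
      then have "x \<in> space M" "S N x \<le> real B" unfolding E_def by auto
      then show "x \<in> {\<omega>\<in>space M. s N - real B \<le> \<bar>S N \<omega> - expectation (S N)\<bar>}"
        unfolding ES by auto
    qed
    have sq: "integrable M (\<lambda>x. (S N x)\<^sup>2)"
    proof (rule integrable_bounded_rv[where B="(real N)\<^sup>2"])
      fix x assume x: "x \<in> space M"
      have "\<bar>S N x\<bar> \<le> real N"
      proof -
        have "\<bar>S N x\<bar> \<le> (\<Sum>n=1..N. \<bar>Z n x\<bar>)" unfolding S_def by (rule sum_abs)
        also have "\<dots> \<le> (\<Sum>n=1..N. 1)" using Zb[OF x] by (intro sum_mono) auto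
        finally show ?thesis by simp
      qed
      then show "\<bar>(S N x)\<^sup>2\<bar> \<le> (real N)\<^sup>2"
        using abs_le_square_iff[of "S N x" "real N"] by simp
    qed simp
    have "prob (E B) \<le> prob {\<omega>\<in>space M. s N - real B \<le> \<bar>S N \<omega> - expectation (S N)\<bar>}"
      by (rule finite_measure_mono[OF sub]) measurable
    also have "\<dots> \<le> variance (S N) / (s N - real B)\<^sup>2"
      by (rule Chebyshev_inequality) (use sq sB in auto)
    also have "\<dots> \<le> (s N + 2 * C) / (s N / 2)\<^sup>2"
    proof (rule frac_le)
      show "0 \<le> s N + 2 * C" using VB[of N] variance_positive[of "S N"] by linarith
      show "variance (S N) \<le> s N + 2 * C" by (rule VB)
      show "0 < (s N / 2)\<^sup>2" using sB by simp
      show "(s N / 2)\<^sup>2 \<le> (s N - real B)\<^sup>2" using sB by (intro power_mono) auto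
    qed
    also have "\<dots> \<le> e"
    proof -
      have "s N + 2 * C \<le> s N * (1 + 2 * \<bar>C\<bar>)"
      proof -
        have "1 \<le> s N" using N unfolding K_def by auto
        then have "2 * C \<le> s N * (2 * \<bar>C\<bar>)" by (smt (verit) mult_left_mono abs_ge_zero mult.commute mult_cancel_right1)
        then show ?thesis by (simp add: algebra_simps)
      qed
      also have "\<dots> \<le> (s N / 2)\<^sup>2 * e"
      proof -
        have "4 * (1 + 2 * \<bar>C\<bar>) \<le> s N * e" using sK e by (simp add: field_simps)
        then have "s N * (4 * (1 + 2 * \<bar>C\<bar>)) \<le> s N * (s N * e)" using sB by (intro mult_left_mono) auto
        then show ?thesis by (simp add: power2_eq_square algebra_simps)
      qed
      finally show ?thesis using sB by (simp add: divide_le_eq mult.commute)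
    qed
    finally show ?thesis .
  qed
  have PE0: "E B \<in> null_sets M" for B
  proof -
    have "prob (E B) \<le> 0"
    proof (rule field_le_epsilon)
      fix e :: real assume "0 < e" then show "prob (E B) \<le> 0 + e" using PE by simp
    qed
    then have "prob (E B) = 0" using measure_nonneg[of M "E B"] by linarith
    then show ?thesis by (simp add: emeasure_eq_measure null_sets_def)
  qed
  show ?thesis
  proof (rule AE_I')
    show "(\<Union>B. E B) \<in> null_sets M" using PE0 by auto
    show "{\<omega>\<in>space M. \<not> (\<forall>N. \<exists>n\<ge>N. 0 < Z n \<omega>)} \<subseteq> (\<Union>B. E B)"
    proof
      fix \<omega> assume "\<omega> \<in> {\<omega>\<in>space M. \<not> (\<forall>N. \<exists>n\<ge>N. 0 < Z n \<omega>)}"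
      then obtain N0 where sp: "\<omega> \<in> space M" and N0: "\<And>n. n \<ge> N0 \<Longrightarrow> \<not> 0 < Z n \<omega>" by auto
      have "S N \<omega> \<le> real N0" for N
      proof -
        have "S N \<omega> \<le> (\<Sum>n=1..N. if n < N0 then 1 else 0)"
          unfolding S_def using Zb[OF sp] N0 by (intro sum_mono) (auto simp: not_less)
        also have "\<dots> = real (card {n\<in>{1..N}. n < N0})" by (simp add: sum.If_cases Int_def)
        also have "\<dots> \<le> real N0"
        proof -
          have "card {n\<in>{1..N}. n < N0} \<le> card {..<N0}" by (rule card_mono) auto
          then show ?thesis by simp
        qed
        finally show ?thesis .
      qed
      then show "\<omega> \<in> (\<Union>B. E B)" unfolding E_def using sp by blast
    qed
  qed
qed

end

lemma avg_to_term:
  fixes x :: "nat \<Rightarrow> real"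
  assumes "(\<lambda>n. (\<Sum>k=1..n. x k) / real n) \<longlonglongrightarrow> 0"
  shows "(\<lambda>n. x n / real n) \<longlonglongrightarrow> 0"
proof -
  let ?A = "\<lambda>n. (\<Sum>k=1..n. x k) / real n"
  have A1: "(\<lambda>m. ?A (Suc m)) \<longlonglongrightarrow> 0" using assms filterlim_sequentially_Suc[of ?A] by simp
  have "(\<lambda>m. ?A (Suc m) - (real m / real (Suc m)) * ?A m) \<longlonglongrightarrow> 0 - 1 * 0"
    by (intro tendsto_intros A1 assms LIMSEQ_n_over_Suc_n)
  moreover have "?A (Suc m) - (real m / real (Suc m)) * ?A m = x (Suc m) / real (Suc m)" for m
  proof (cases "m = 0")
    case True then show ?thesis by simp
  next
    case False
    have g: "(a / b) * (c / a) = c / b" if "a \<noteq> 0" for a b c :: real using that by (simp add: field_simps)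
    have "?A (Suc m) - (real m / real (Suc m)) * ?A m = (\<Sum>k=1..Suc m. x k) / real (Suc m) - (\<Sum>k=1..m. x k) / real (Suc m)"
      using g[of "real m" "real (Suc m)" "\<Sum>k=1..m. x k"] False by simp
    also have "\<dots> = ((\<Sum>k=1..Suc m. x k) - (\<Sum>k=1..m. x k)) / real (Suc m)"
      by (rule diff_divide_distrib[symmetric])
    also have "(\<Sum>k=1..Suc m. x k) - (\<Sum>k=1..m. x k) = x (Suc m)" by (simp add: sum.cl_ivl_Suc)
    finally show ?thesis .
  qed
  ultimately have "(\<lambda>m. x (Suc m) / real (Suc m)) \<longlonglongrightarrow> 0" by simp
  then show ?thesis using filterlim_sequentially_Suc[of "\<lambda>n. x n / real n"] by simp
qed

context prob_space begin

lemma covar_affine: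
  assumes "integrable M U" "integrable M V" "integrable M (\<lambda>x. U x * V x)"
  shows "covar M (\<lambda>x. c + a * U x) (\<lambda>x. d + b * V x) = a * b * covar M U V"
proof -
  have "(\<lambda>x. (c + a * U x) * (d + b * V x)) = (\<lambda>x. c * d + c * b * V x + a * d * U x + a * b * (U x * V x))"
    by (auto simp: fun_eq_iff algebra_simps)
  then have "expectation (\<lambda>x. (c + a * U x) * (d + b * V x)) = c * d + c * b * expectation V + a * d * expectation U + a * b * expectation (\<lambda>x. U x * V x)"
    using assms by (simp add: prob_space)
  moreover have "expectation (\<lambda>x. c + a * U x) = c + a * expectation U" using assms by (simp add: prob_space)
  moreover have "expectation (\<lambda>x. d + b * V x) = d + b * expectation V" using assms by (simp add: prob_space)
  ultimately show ?thesis unfolding covar_def by (simp add: algebra_simps)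
qed

lemma ramp_integrable:
  fixes X :: "'a \<Rightarrow> real"
  assumes [measurable]: "X \<in> borel_measurable M" "Y \<in> borel_measurable M" and "a1 \<le> b1" "a2 \<le> b2"
  shows "integrable M (\<lambda>\<omega>. ramp a1 b1 (X \<omega>))" "integrable M (\<lambda>\<omega>. ramp a2 b2 (Y \<omega>))"
    "integrable M (\<lambda>\<omega>. ramp a1 b1 (X \<omega>) * ramp a2 b2 (Y \<omega>))"
proof -
  show "integrable M (\<lambda>\<omega>. ramp a1 b1 (X \<omega>))"
    by (rule integrable_bounded_rv[where B="b1-a1"]) (use ramp_bounds[OF assms(3)] in auto)
  show "integrable M (\<lambda>\<omega>. ramp a2 b2 (Y \<omega>))"
    by (rule integrable_bounded_rv[where B="b2-a2"]) (use ramp_bounds[OF assms(4)] in auto)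
  show "integrable M (\<lambda>\<omega>. ramp a1 b1 (X \<omega>) * ramp a2 b2 (Y \<omega>))"
    by (rule integrable_bounded_rv[where B="(b1-a1)*(b2-a2)"])
       (use ramp_bounds[OF assms(3)] ramp_bounds[OF assms(4)] assms(3,4) in \<open>auto intro!: mult_mono simp: abs_mult\<close>)
qed

lemma cov_pair_bound:
  assumes pqd: "pairwise_PQD M X" and ij: "1 \<le> i" "i < j"
    and [measurable]: "X i \<in> borel_measurable M" "X j \<in> borel_measurable M"
    and "a1 \<le> b1" "a2 \<le> b2" "- real i \<le> a1" "b1 \<le> real i" "- real j \<le> a2" "b2 \<le> real j"
  shows "0 \<le> covar M (\<lambda>\<omega>. ramp a1 b1 (X i \<omega>)) (\<lambda>\<omega>. ramp a2 b2 (X j \<omega>))"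
    and "covar M (\<lambda>\<omega>. ramp a1 b1 (X i \<omega>)) (\<lambda>\<omega>. ramp a2 b2 (X j \<omega>)) \<le> G M (X i) (X j) (real i) (real j)"
proof -
  have H0: "0 \<le> Hq (X i) (X j) s t" for s t by (rule PQD_Hq_nonneg[OF pqd]) (use ij in auto)
  have eq: "covar M (\<lambda>\<omega>. ramp a1 b1 (X i \<omega>)) (\<lambda>\<omega>. ramp a2 b2 (X j \<omega>)) = (LBINT t:{a2..b2}. LBINT s:{a1..b1}. Hq (X i) (X j) s t)"
    unfolding covar_def by (rule cov_ramp) (use assms in auto)
  show "0 \<le> covar M (\<lambda>\<omega>. ramp a1 b1 (X i \<omega>)) (\<lambda>\<omega>. ramp a2 b2 (X j \<omega>))"
    unfolding eq by (rule Hq_mono_box(1)[OF _ _ H0]) (use assms in auto)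
  show "covar M (\<lambda>\<omega>. ramp a1 b1 (X i \<omega>)) (\<lambda>\<omega>. ramp a2 b2 (X j \<omega>)) \<le> G M (X i) (X j) (real i) (real j)"
    unfolding eq by (rule Hq_mono_box(2)[OF _ _ H0]) (use assms in auto)
qed

lemma G_nonneg:
  assumes pqd: "pairwise_PQD M X" and ij: "1 \<le> i" "i < j"
    and [measurable]: "X i \<in> borel_measurable M" "X j \<in> borel_measurable M"
  shows "0 \<le> G M (X i) (X j) (real i) (real j)"
  using cov_pair_bound[OF assms, of "- real i" "real i" "- real j" "real j"] ij by linarith

lemma tail_sum_integrable:
  fixes V :: "'a \<Rightarrow> real"
  assumes [measurable]: "V \<in> borel_measurable M"
    and bnd: "\<And>N. (\<Sum>n<N. prob {\<omega>\<in>space M. real (Suc n) < V \<omega>}) \<le> B"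
  shows "integrable M (\<lambda>\<omega>. max (V \<omega>) 0)"
proof (rule integrableI_nonneg)
  let ?p = "\<lambda>n. prob {\<omega>\<in>space M. real (Suc n) < V \<omega>}"
  have sm: "summable ?p" by (rule summableI_nonneg_bounded[where x=B]) (use bnd in auto)
  have pw: "ennreal (max (V \<omega>) 0) \<le> 1 + (\<Sum>n. indicator {\<omega>\<in>space M. real (Suc n) < V \<omega>} \<omega>)" if sp: "\<omega> \<in> space M" for \<omega>
  proof -
    define N where "N = nat \<lceil>max (V \<omega>) 0\<rceil>"
    have "max (V \<omega>) 0 \<le> real N" unfolding N_def by linarith
    then have "max (V \<omega>) 0 \<le> 1 + (\<Sum>n<N. if real (Suc n) < max (V \<omega>) 0 then 1 else 0)" by (rule count_ge)
    also have "(\<Sum>n<N. if real (Suc n) < max (V \<omega>) 0 then 1 else 0) = (\<Sum>n<N. if real (Suc n) < V \<omega> then 1 else (0::real))"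
      by (intro sum.cong) auto
    finally have "ennreal (max (V \<omega>) 0) \<le> ennreal (1 + (\<Sum>n<N. if real (Suc n) < V \<omega> then 1 else 0))"
      by (rule ennreal_leI)
    also have "\<dots> = 1 + ennreal (\<Sum>n<N. if real (Suc n) < V \<omega> then 1 else 0)"
      by (rule ennreal_plus[of 1, simplified]) (rule sum_nonneg, auto)
    also have "\<dots> = 1 + (\<Sum>n<N. ennreal (if real (Suc n) < V \<omega> then 1 else 0))"
      by (subst sum_ennreal) auto
    also have "\<dots> \<le> 1 + (\<Sum>n. ennreal (if real (Suc n) < V \<omega> then 1 else 0))"
      by (intro add_left_mono sum_le_suminf[OF summableI]) auto
    also have "\<dots> = 1 + (\<Sum>n. indicator {\<omega>\<in>space M. real (Suc n) < V \<omega>} \<omega>)"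
    proof -
      have "ennreal (if real (Suc n) < V \<omega> then 1 else 0) = indicator {\<omega>\<in>space M. real (Suc n) < V \<omega>} \<omega>" for n
        using sp by (auto simp: indicator_def)
      then show ?thesis by (simp only:)
    qed
    finally show ?thesis .
  qed
  have "(\<integral>\<^sup>+\<omega>. ennreal (max (V \<omega>) 0) \<partial>M) \<le> (\<integral>\<^sup>+\<omega>. 1 + (\<Sum>n. indicator {\<omega>\<in>space M. real (Suc n) < V \<omega>} \<omega>) \<partial>M)"
    by (rule nn_integral_mono) (use pw in auto)
  also have "\<dots> = 1 + (\<Sum>n. emeasure M {\<omega>\<in>space M. real (Suc n) < V \<omega>})"
    by (subst nn_integral_add) (auto simp: nn_integral_suminf emeasure_space_1)
  also have "\<dots> = 1 + (\<Sum>n. ennreal (?p n))"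
    by (simp only: emeasure_eq_measure)
  also have "\<dots> = 1 + ennreal (\<Sum>n. ?p n)"
    by (simp only: suminf_ennreal2[OF measure_nonneg sm])
  also have "\<dots> = ennreal (1 + (\<Sum>n. ?p n))"
    by (simp only: ennreal_1[symmetric] ennreal_plus[symmetric] measure_nonneg suminf_nonneg[OF sm] zero_le_one add_nonneg_nonneg)
  also have "\<dots> < \<infinity>" by simp
  finally show "(\<integral>\<^sup>+\<omega>. ennreal (max (V \<omega>) 0) \<partial>M) < \<infinity>" .
qed auto

end

lemma finite_le_infsum:
  fixes g :: "'b \<Rightarrow> real"
  assumes "g summable_on P" "\<And>p. p \<in> P \<Longrightarrow> 0 \<le> g p" "finite F" "F \<subseteq> P"
  shows "sum g F \<le> infsum g P"
proof -
  have "sum g F = infsum g F" using assms(3) by simp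
  also have "\<dots> \<le> infsum g P"
    by (rule infsum_mono_neutral) (use assms in auto)
  finally show ?thesis .
qed

context prob_space begin

lemma distr_comp:
  assumes [measurable]: "A \<in> borel_measurable M" "f \<in> borel_measurable (borel :: real measure)"
  shows "distr M borel (\<lambda>\<omega>. f (A \<omega>)) = distr (distr M borel A) borel f"
  using distr_distr[of f borel borel A M] by (simp add: comp_def)

lemma conv_case:
  fixes Z :: "nat \<Rightarrow> 'a \<Rightarrow> real" and X :: "nat \<Rightarrow> 'a \<Rightarrow> real"
  assumes Zm[measurable]: "\<And>n. Z n \<in> borel_measurable M"
    and Zb: "\<And>n \<omega>. \<omega> \<in> space M \<Longrightarrow> 0 \<le> Z n \<omega> \<and> Z n \<omega> \<le> 1"
    and div: "\<And>B. \<exists>N. B \<le> (\<Sum>n=1..N. expectation (Z n))"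
    and cC: "\<And>N. (\<Sum>p\<in>{p\<in>{1..N} \<times> {1..N}. fst p < snd p}. covar M (Z (fst p)) (Z (snd p))) \<le> C"
    and big: "\<And>n \<omega>. 1 \<le> n \<Longrightarrow> \<omega> \<in> space M \<Longrightarrow> 0 < Z n \<omega> \<Longrightarrow> 1/2 < \<bar>X n \<omega> / real n\<bar>"
    and xn: "AE \<omega> in M. (\<lambda>n. X n \<omega> / real n) \<longlonglongrightarrow> 0"
  shows False
proof -
  have fr: "AE \<omega> in M. \<forall>N. \<exists>n\<ge>N. 0 < Z n \<omega>" by (rule frequently_pos[OF Zm Zb div cC])
  have "AE \<omega> in M. False"
    using fr xn AE_space
  proof eventually_elim
    case (elim \<omega>)
    have "eventually (\<lambda>n. dist (X n \<omega> / real n) 0 < 1/2) sequentially"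
      using elim(2) by (rule tendstoD) simp
    then obtain N0 where N0: "\<And>n. n \<ge> N0 \<Longrightarrow> \<bar>X n \<omega> / real n\<bar> < 1/2"
      unfolding eventually_sequentially by auto
    obtain n where n: "n \<ge> max N0 1" "0 < Z n \<omega>" using elim(1) by blast
    have "1/2 < \<bar>X n \<omega> / real n\<bar>" using big[OF _ elim(3) n(2)] n(1) by simp
    moreover have "\<bar>X n \<omega> / real n\<bar> < 1/2" by (rule N0) (use n(1) in simp)
    ultimately show False by simp
  qed
  then show False by (simp add: AE_False)
qed

lemma etemadi_ramp:
  fixes Y X :: "nat \<Rightarrow> 'a \<Rightarrow> real"
  assumes Ym[measurable]: "\<And>n. Y n \<in> borel_measurable M"
    and Y0: "\<And>n \<omega>. \<omega> \<in> space M \<Longrightarrow> 0 \<le> Y n \<omega>"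
    and Yd: "\<And>n. distr M borel (Y n) = distr M borel (Y 1)"
    and Yi: "integrable M (Y 1)"
    and Xm: "\<And>n. 1 \<le> n \<Longrightarrow> X n \<in> borel_measurable M"
    and pqd: "pairwise_PQD M X"
    and ss: "s * s = 1"
    and ab: "\<And>i. 1 \<le> i \<Longrightarrow> a i \<le> b i \<and> - real i \<le> a i \<and> b i \<le> real i"
    and rep: "\<And>i. 1 \<le> i \<Longrightarrow> (\<lambda>\<omega>. min (Y i \<omega>) (real i)) = (\<lambda>\<omega>. c i + s * ramp (a i) (b i) (X i \<omega>))"
    and gF: "\<And>F. finite F \<Longrightarrow> F \<subseteq> {(i,j). 1 \<le> i \<and> i < j} \<Longrightarrow>
               (\<Sum>(i,j)\<in>F. G M (X i) (X j) (real i) (real j) / (real i * real j)) \<le> C"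
  shows "AE \<omega> in M. (\<lambda>n. (\<Sum>i=1..n. Y i \<omega>) / real n) \<longlonglongrightarrow> expectation (Y 1)"
proof -
  have cv: "covar M (\<lambda>\<omega>. min (Y i \<omega>) (real i)) (\<lambda>\<omega>. min (Y j \<omega>) (real j))
      = covar M (\<lambda>\<omega>. ramp (a i) (b i) (X i \<omega>)) (\<lambda>\<omega>. ramp (a j) (b j) (X j \<omega>))"
    if "1 \<le> i" "i < j" for i j
  proof -
    have j: "1 \<le> j" using that by simp
    have "covar M (\<lambda>\<omega>. min (Y i \<omega>) (real i)) (\<lambda>\<omega>. min (Y j \<omega>) (real j))
        = covar M (\<lambda>\<omega>. c i + s * ramp (a i) (b i) (X i \<omega>)) (\<lambda>\<omega>. c j + s * ramp (a j) (b j) (X j \<omega>))"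
      using rep[OF that(1)] rep[OF j] by simp
    also have "\<dots> = s * s * covar M (\<lambda>\<omega>. ramp (a i) (b i) (X i \<omega>)) (\<lambda>\<omega>. ramp (a j) (b j) (X j \<omega>))"
      by (rule covar_affine) (use ramp_integrable[OF Xm[OF that(1)] Xm[OF j]] ab[OF that(1)] ab[OF j] in auto)
    finally show ?thesis using ss by simp
  qed
  have cb: "0 \<le> covar M (\<lambda>\<omega>. ramp (a i) (b i) (X i \<omega>)) (\<lambda>\<omega>. ramp (a j) (b j) (X j \<omega>)) \<and>
      covar M (\<lambda>\<omega>. ramp (a i) (b i) (X i \<omega>)) (\<lambda>\<omega>. ramp (a j) (b j) (X j \<omega>)) \<le> G M (X i) (X j) (real i) (real j)"
    if "1 \<le> i" "i < j" for i j
  proof -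
    have j: "1 \<le> j" using that by simp
    show ?thesis using cov_pair_bound[OF pqd that Xm[OF that(1)] Xm[OF j]] ab[OF that(1)] ab[OF j] by auto
  qed
  show ?thesis
  proof (rule etemadi[of Y, OF Ym Y0 Yd Yi])
    show "0 \<le> covar M (\<lambda>\<omega>. min (Y i \<omega>) (real i)) (\<lambda>\<omega>. min (Y j \<omega>) (real j))" if "1 \<le> i" "i < j" for i j
      using cv[OF that] cb[OF that] by simp
    fix F :: "(nat \<times> nat) set" assume F: "finite F" "F \<subseteq> {(i,j). 1 \<le> i \<and> i < j}"
    have "(\<Sum>(i,j)\<in>F. covar M (\<lambda>\<omega>. min (Y i \<omega>) (real i)) (\<lambda>\<omega>. min (Y j \<omega>) (real j)) / (real i * real j))
        \<le> (\<Sum>(i,j)\<in>F. G M (X i) (X j) (real i) (real j) / (real i * real j))"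
    proof (rule sum_mono)
      fix p assume "p \<in> F"
      then obtain i j where p: "p = (i, j)" "1 \<le> i" "i < j" using F by (cases p) auto
      show "(case p of (i, j) \<Rightarrow> covar M (\<lambda>\<omega>. min (Y i \<omega>) (real i)) (\<lambda>\<omega>. min (Y j \<omega>) (real j)) / (real i * real j))
          \<le> (case p of (i, j) \<Rightarrow> G M (X i) (X j) (real i) (real j) / (real i * real j))"
        unfolding p(1) using cv[OF p(2,3)] cb[OF p(2,3)] by (simp add: divide_right_mono)
    qed
    also have "\<dots> \<le> C" by (rule gF[OF F])
    finally show "(\<Sum>(i,j)\<in>F. covar M (\<lambda>\<omega>. min (Y i \<omega>) (real i)) (\<lambda>\<omega>. min (Y j \<omega>) (real j)) / (real i * real j)) \<le> C" .
  qed
qed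

lemma cC_ramp:
  fixes Z X :: "nat \<Rightarrow> 'a \<Rightarrow> real"
  assumes Xm: "\<And>n. 1 \<le> n \<Longrightarrow> X n \<in> borel_measurable M"
    and pqd: "pairwise_PQD M X"
    and ss: "s * s = 1"
    and ab: "\<And>i. 1 \<le> i \<Longrightarrow> a i \<le> b i \<and> - real i \<le> a i \<and> b i \<le> real i"
    and rep: "\<And>n. 1 \<le> n \<Longrightarrow> Z n = (\<lambda>\<omega>. c + (s * (2 / real n)) * ramp (a n) (b n) (X n \<omega>))"
    and gF: "\<And>F. finite F \<Longrightarrow> F \<subseteq> {(i,j). 1 \<le> i \<and> i < j} \<Longrightarrow>
               (\<Sum>(i,j)\<in>F. G M (X i) (X j) (real i) (real j) / (real i * real j)) \<le> C"
  shows "(\<Sum>p\<in>{p\<in>{1..N} \<times> {1..N}. fst p < snd p}. covar M (Z (fst p)) (Z (snd p))) \<le> 4 * C"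
proof -
  let ?U = "{p\<in>{1..N} \<times> {1..N}. fst p < snd p}"
  have tm: "covar M (Z (fst p)) (Z (snd p)) \<le> 4 * (case p of (i, j) \<Rightarrow> G M (X i) (X j) (real i) (real j) / (real i * real j))"
    if pU: "p \<in> ?U" for p
  proof -
    obtain i j where p: "p = (i, j)" "1 \<le> i" "i < j" using pU by (cases p) auto
    have j: "1 \<le> j" using p by simp
    have "covar M (Z i) (Z j) = (s * (2 / real i)) * (s * (2 / real j)) *
        covar M (\<lambda>\<omega>. ramp (a i) (b i) (X i \<omega>)) (\<lambda>\<omega>. ramp (a j) (b j) (X j \<omega>))"
      unfolding rep[OF p(2)] rep[OF j]
      by (rule covar_affine) (use ramp_integrable[OF Xm[OF p(2)] Xm[OF j]] ab[OF p(2)] ab[OF j] in auto)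
    also have "\<dots> = (4 / (real i * real j)) * covar M (\<lambda>\<omega>. ramp (a i) (b i) (X i \<omega>)) (\<lambda>\<omega>. ramp (a j) (b j) (X j \<omega>))"
    proof -
      have "(s * (2 / real i)) * (s * (2 / real j)) = (s * s) * (4 / (real i * real j))" by (simp add: field_simps)
      then show ?thesis using ss by simp
    qed
    also have "\<dots> \<le> (4 / (real i * real j)) * G M (X i) (X j) (real i) (real j)"
      using cov_pair_bound(2)[OF pqd p(2,3) Xm[OF p(2)] Xm[OF j]] ab[OF p(2)] ab[OF j]
      by (intro mult_left_mono) auto
    finally show ?thesis unfolding p(1) by simp
  qed
  have "(\<Sum>p\<in>?U. covar M (Z (fst p)) (Z (snd p))) \<le> (\<Sum>p\<in>?U. 4 * (case p of (i, j) \<Rightarrow> G M (X i) (X j) (real i) (real j) / (real i * real j)))"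
    by (intro sum_mono tm)
  also have "\<dots> = 4 * (\<Sum>(i,j)\<in>?U. G M (X i) (X j) (real i) (real j) / (real i * real j))"
    by (simp add: sum_distrib_left)
  also have "\<dots> \<le> 4 * C" by (intro mult_left_mono gF) auto
  finally show ?thesis .
qed

end

theorem corollary2:
  fixes M :: "'a measure" and X :: "nat \<Rightarrow> 'a \<Rightarrow> real"
  assumes "prob_space M"
    and rv: "\<And>n. 1 \<le> n \<Longrightarrow> X n \<in> borel_measurable M"
    and ident: "\<And>n. 1 \<le> n \<Longrightarrow> distr M borel (X n) = distr M borel (X 1)"
    and pqd: "pairwise_PQD M X"
    and ser: "(\<lambda>(k, j). G M (X k) (X j) (real k) (real j) / (real k * real j))
               summable_on {(k, j). 1 \<le> k \<and> k < j}"
  shows "integrable M (X 1) \<longleftrightarrow>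
    (AE \<omega> in M. (\<lambda>n. (\<Sum>k=1..n. X k \<omega> - integral\<^sup>L M (X 1)) / real n) \<longlonglongrightarrow> 0)"
proof -
  interpret prob_space M by fact
  define Xp where "Xp n = X (max 1 n)" for n
  have Xpm[measurable]: "Xp n \<in> borel_measurable M" for n unfolding Xp_def by (rule rv) simp
  have X1m[measurable]: "X 1 \<in> borel_measurable M" by (rule rv) simp
  have Xpd: "distr M borel (Xp n) = distr M borel (X 1)" for n unfolding Xp_def by (rule ident) simp
  have Xp1: "Xp n = X n" if "1 \<le> n" for n unfolding Xp_def using that by (simp add: max_def)
  have Xm: "X n \<in> borel_measurable M" if "1 \<le> n" for n using rv that .
  define P where "P = {(k, j). 1 \<le> k \<and> k < (j::nat)}"
  define g where "g = (\<lambda>(k, j). G M (X k) (X j) (real k) (real j) / (real k * real j))"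
  define C where "C = infsum g P"
  have g0: "0 \<le> g p" if pP: "p \<in> P" for p
  proof -
    obtain k j where p: "p = (k, j)" "1 \<le> k" "k < j" using pP unfolding P_def by (cases p) auto
    have "0 \<le> G M (X k) (X j) (real k) (real j)" by (rule G_nonneg[OF pqd p(2,3) Xm Xm]) (use p in auto)
    then show ?thesis unfolding g_def p(1) by simp
  qed
  have gF: "sum g F \<le> C" if "finite F" "F \<subseteq> P" for F
    unfolding C_def by (rule finite_le_infsum) (use ser g0 that in \<open>auto simp: g_def P_def\<close>)
  have cb: "0 \<le> covar M (\<lambda>\<omega>. ramp a1 b1 (X i \<omega>)) (\<lambda>\<omega>. ramp a2 b2 (X j \<omega>)) \<and>
            covar M (\<lambda>\<omega>. ramp a1 b1 (X i \<omega>)) (\<lambda>\<omega>. ramp a2 b2 (X j \<omega>)) \<le> G M (X i) (X j) (real i) (real j)"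
    if "1 \<le> i" "i < j" "a1 \<le> b1" "a2 \<le> b2" "- real i \<le> a1" "b1 \<le> real i" "- real j \<le> a2" "b2 \<le> real j"
    for i j a1 b1 a2 b2
    using cov_pair_bound[OF pqd that(1,2) Xm Xm that(3-8)] that by auto
  have gF': "(\<Sum>(i,j)\<in>F. G M (X i) (X j) (real i) (real j) / (real i * real j)) \<le> C"
    if "finite F" "F \<subseteq> {(i,j). 1 \<le> i \<and> i < j}" for F :: "(nat \<times> nat) set"
    using gF[OF that(1)] that(2) unfolding g_def P_def by simp
  define c where "c = integral\<^sup>L M (X 1)"
  have fwd: "AE \<omega> in M. (\<lambda>n. (\<Sum>k=1..n. X k \<omega> - c) / real n) \<longlonglongrightarrow> 0" if int: "integrable M (X 1)"
  proof -
    define Yp where "Yp n = (\<lambda>\<omega>. max (Xp n \<omega>) 0)" for n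
    define Yn where "Yn n = (\<lambda>\<omega>. max (- Xp n \<omega>) 0)" for n
    have Ypm[measurable]: "Yp n \<in> borel_measurable M" for n unfolding Yp_def by measurable
    have Ynm[measurable]: "Yn n \<in> borel_measurable M" for n unfolding Yn_def by measurable
    have dcomp: "distr M borel (\<lambda>\<omega>. f (Xp n \<omega>)) = distr M borel (\<lambda>\<omega>. f (Xp 1 \<omega>))"
      if fm[measurable]: "f \<in> borel_measurable (borel :: real measure)" for f n
      using distr_comp[OF Xpm fm, of n] distr_comp[OF Xpm fm, of 1] Xpd[of n] Xpd[of 1] by simp
    have Xp11: "Xp 1 = X 1" by (rule Xp1) simp
    have Ap: "AE \<omega> in M. (\<lambda>n. (\<Sum>i=1..n. Yp i \<omega>) / real n) \<longlonglongrightarrow> expectation (Yp 1)"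
    proof (rule etemadi_ramp[of Yp X 1 "\<lambda>_. 0" real "\<lambda>_. 0" C])
      show "\<And>n. distr M borel (Yp n) = distr M borel (Yp 1)" unfolding Yp_def by (rule dcomp) measurable
      show "integrable M (Yp 1)" unfolding Yp_def Xp11 using int by auto
      show "\<And>i. 1 \<le> i \<Longrightarrow> (\<lambda>\<omega>. min (Yp i \<omega>) (real i)) = (\<lambda>\<omega>. 0 + 1 * ramp 0 (real i) (X i \<omega>))"
        by (auto simp: fun_eq_iff Yp_def Xp1 ramp_def)
    qed (use Xm pqd gF' in \<open>auto simp: Yp_def\<close>)
    have An: "AE \<omega> in M. (\<lambda>n. (\<Sum>i=1..n. Yn i \<omega>) / real n) \<longlonglongrightarrow> expectation (Yn 1)"
    proof -
      have Ynd: "\<And>n. distr M borel (Yn n) = distr M borel (Yn 1)" unfolding Yn_def by (rule dcomp) measurable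
      have Yni: "integrable M (Yn 1)" unfolding Yn_def Xp11 using int by auto
      have Yn0: "\<And>n \<omega>. \<omega> \<in> space M \<Longrightarrow> 0 \<le> Yn n \<omega>" by (simp add: Yn_def)
      have ss: "(-1::real) * (-1) = 1" by simp
      have abn: "\<And>i. 1 \<le> i \<Longrightarrow> - real i \<le> 0 \<and> - real i \<le> - real i \<and> (0::real) \<le> real i" by simp
      have repn: "\<And>i. 1 \<le> i \<Longrightarrow> (\<lambda>\<omega>. min (Yn i \<omega>) (real i)) = (\<lambda>\<omega>. real i + (-1) * ramp (- real i) 0 (X i \<omega>))"
        by (auto simp: fun_eq_iff Yn_def Xp1 ramp_def)
      show ?thesis
        by (rule etemadi_ramp[where a="\<lambda>i. - real i" and b="\<lambda>_. 0", OF Ynm Yn0 Ynd Yni Xm pqd ss abn repn gF'])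
    qed
    have EX: "c = expectation (Yp 1) - expectation (Yn 1)"
    proof -
      have "expectation (Yp 1) - expectation (Yn 1) = expectation (\<lambda>\<omega>. Yp 1 \<omega> - Yn 1 \<omega>)"
        unfolding Yp_def Yn_def Xp11 by (rule Bochner_Integration.integral_diff[symmetric]) (use int in auto)
      also have "\<dots> = c" unfolding c_def Yp_def Yn_def Xp11
        by (rule Bochner_Integration.integral_cong) auto
      finally show ?thesis by simp
    qed
    show ?thesis
      using Ap An
    proof eventually_elim
      case (elim \<omega>)
      have "(\<lambda>n. (\<Sum>i=1..n. Yp i \<omega>) / real n - (\<Sum>i=1..n. Yn i \<omega>) / real n - c) \<longlonglongrightarrow> expectation (Yp 1) - expectation (Yn 1) - c"
        by (intro tendsto_diff elim tendsto_const)
      then have L: "(\<lambda>n. (\<Sum>i=1..n. Yp i \<omega>) / real n - (\<Sum>i=1..n. Yn i \<omega>) / real n - c) \<longlonglongrightarrow> 0"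
        using EX by simp
      have "eventually (\<lambda>n. (\<Sum>i=1..n. Yp i \<omega>) / real n - (\<Sum>i=1..n. Yn i \<omega>) / real n - c = (\<Sum>k=1..n. X k \<omega> - c) / real n) sequentially"
        unfolding eventually_sequentially
      proof (intro exI allI impI)
        fix n :: nat assume n: "n \<ge> 1"
        have "(\<Sum>k=1..n. X k \<omega> - c) = (\<Sum>k=1..n. Yp k \<omega> - Yn k \<omega>) - real n * c"
        proof -
          have "(\<Sum>k=1..n. X k \<omega> - c) = (\<Sum>k=1..n. (Yp k \<omega> - Yn k \<omega>) - c)"
            by (intro sum.cong refl) (auto simp: Yp_def Yn_def Xp1)
          then show ?thesis by (simp add: sum_subtractf)
        qed
        then show "(\<Sum>i=1..n. Yp i \<omega>) / real n - (\<Sum>i=1..n. Yn i \<omega>) / real n - c = (\<Sum>k=1..n. X k \<omega> - c) / real n"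
          using n by (simp add: sum_subtractf field_simps)
      qed
      then show ?case using L by (rule Lim_transform_eventually[rotated])
    qed
  qed
  have bwd: "integrable M (X 1)" if ae: "AE \<omega> in M. (\<lambda>n. (\<Sum>k=1..n. X k \<omega> - c) / real n) \<longlonglongrightarrow> 0"
  proof (rule ccontr)
    assume ni: "\<not> integrable M (X 1)"
    have xn: "AE \<omega> in M. (\<lambda>n. X n \<omega> / real n) \<longlonglongrightarrow> 0"
      using ae
    proof eventually_elim
      case (elim \<omega>)
      have "(\<lambda>n. (X n \<omega> - c) / real n) \<longlonglongrightarrow> 0" by (rule avg_to_term[OF elim])
      then have "(\<lambda>n. (X n \<omega> - c) / real n + c / real n) \<longlonglongrightarrow> 0 + 0"
        by (intro tendsto_add lim_const_over_n)
      moreover have "(X n \<omega> - c) / real n + c / real n = X n \<omega> / real n" for n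
        by (simp add: diff_divide_distrib)
      ultimately show ?case by simp
    qed
    have "\<not> (\<exists>B. \<forall>N. (\<Sum>n<N. prob {\<omega>\<in>space M. real (Suc n) < X 1 \<omega>}) \<le> B) \<or>
          \<not> (\<exists>B. \<forall>N. (\<Sum>n<N. prob {\<omega>\<in>space M. real (Suc n) < - X 1 \<omega>}) \<le> B)"
    proof (rule ccontr)
      assume "\<not> ?thesis"
      then obtain B1 B2 where B1: "\<And>N. (\<Sum>n<N. prob {\<omega>\<in>space M. real (Suc n) < X 1 \<omega>}) \<le> B1"
        and B2: "\<And>N. (\<Sum>n<N. prob {\<omega>\<in>space M. real (Suc n) < - X 1 \<omega>}) \<le> B2" by blast
      have i1: "integrable M (\<lambda>\<omega>. max (X 1 \<omega>) 0)" by (rule tail_sum_integrable[OF X1m B1])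
      have i2: "integrable M (\<lambda>\<omega>. max (- X 1 \<omega>) 0)" by (rule tail_sum_integrable[OF _ B2]) measurable
      have "integrable M (\<lambda>\<omega>. max (X 1 \<omega>) 0 - max (- X 1 \<omega>) 0)" using i1 i2 by auto
      moreover have "(\<lambda>\<omega>. max (X 1 \<omega>) 0 - max (- X 1 \<omega>) 0) = X 1" by (auto simp: fun_eq_iff)
      ultimately show False using ni by simp
    qed
    then show False
    proof
      assume up: "\<not> (\<exists>B. \<forall>N. (\<Sum>n<N. prob {\<omega>\<in>space M. real (Suc n) < X 1 \<omega>}) \<le> B)"
      define Z where "Z n = (\<lambda>\<omega>. 0 + (1 * (2 / real n)) * ramp (real n / 2) (real n) (Xp n \<omega>))" for n
      have Zm[measurable]: "\<And>n. Z n \<in> borel_measurable M" unfolding Z_def by measurable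
      show False
      proof (rule conv_case[of Z "4 * C" X])
        show "\<And>n. Z n \<in> borel_measurable M" unfolding Z_def by measurable
        show "0 \<le> Z n \<omega> \<and> Z n \<omega> \<le> 1" for n \<omega>
        proof -
          have r: "0 \<le> ramp (real n / 2) (real n) x \<and> ramp (real n / 2) (real n) x \<le> real n / 2" for x
            using ramp_bounds[of "real n / 2" "real n" x] by simp
          show ?thesis
          proof (cases "n = 0")
            case True then show ?thesis by (simp add: Z_def)
          next
            case False
            have "(2 / real n) * ramp (real n / 2) (real n) (Xp n \<omega>) \<le> (2 / real n) * (real n / 2)"
              using r by (intro mult_left_mono) auto
            then show ?thesis using False r by (simp add: Z_def)
          qed
        qed
        show "\<exists>N. B \<le> (\<Sum>n=1..N. expectation (Z n))" for B
        proof -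
          obtain N where N: "B < (\<Sum>n<N. prob {\<omega>\<in>space M. real (Suc n) < X 1 \<omega>})"
            using up by (meson not_le)
          have "(\<Sum>n<N. prob {\<omega>\<in>space M. real (Suc n) < X 1 \<omega>}) \<le> (\<Sum>n<N. expectation (Z (Suc n)))"
          proof (rule sum_mono)
            fix n
            let ?m = "Suc n"
            have "prob {\<omega>\<in>space M. real ?m < X 1 \<omega>} = prob {\<omega>\<in>space M. real ?m < Xp ?m \<omega>}"
              using ident_prob[OF Xpm X1m, of "{real ?m<..}" ?m] Xpd[of ?m] by simp
            also have "\<dots> = expectation (indicator {\<omega>\<in>space M. real ?m < Xp ?m \<omega>})" by simp
            also have "\<dots> \<le> expectation (Z ?m)"
            proof (rule integral_mono)
              show "integrable M (indicator {\<omega>\<in>space M. real ?m < Xp ?m \<omega>} :: 'a \<Rightarrow> real)"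
                by (rule integrable_bounded_rv[where B=1]) (auto simp: indicator_def)
              show "integrable M (Z ?m)"
                by (rule integrable_bounded_rv[where B=1]) (use \<open>\<And>n \<omega>. 0 \<le> Z n \<omega> \<and> Z n \<omega> \<le> 1\<close> in \<open>auto simp: abs_le_iff\<close>)
              fix \<omega> assume "\<omega> \<in> space M"
              show "indicator {\<omega>\<in>space M. real ?m < Xp ?m \<omega>} \<omega> \<le> Z ?m \<omega>"
              proof (cases "real ?m < Xp ?m \<omega>")
                case True
                then have "ramp (real ?m / 2) (real ?m) (Xp ?m \<omega>) = real ?m / 2" by (simp add: ramp_def field_simps)
                then have "Z ?m \<omega> = 1" by (simp add: Z_def)
                then show ?thesis by (simp add: indicator_def)
              next
                case False
                then show ?thesis using \<open>\<And>n \<omega>. 0 \<le> Z n \<omega> \<and> Z n \<omega> \<le> 1\<close>[of ?m \<omega>] by (simp add: indicator_def)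
              qed
            qed
            finally show "prob {\<omega>\<in>space M. real (Suc n) < X 1 \<omega>} \<le> expectation (Z (Suc n))" .
          qed
          also have "\<dots> = (\<Sum>n=1..N. expectation (Z n))"
            using sum.atLeast1_atMost_eq[of "\<lambda>n. expectation (Z n)" N] by simp
          finally show ?thesis using N by (intro exI[of _ N]) simp
        qed
        show "(\<Sum>p\<in>{p\<in>{1..N} \<times> {1..N}. fst p < snd p}. covar M (Z (fst p)) (Z (snd p))) \<le> 4 * C" for N
          by (rule cC_ramp[of X 1 "\<lambda>n. real n / 2" real Z 0 C]) (use Xm pqd gF' in \<open>auto simp: Z_def Xp1\<close>)
        show "1/2 < \<bar>X n \<omega> / real n\<bar>" if "1 \<le> n" "\<omega> \<in> space M" "0 < Z n \<omega>" for n \<omega>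
        proof -
          have "0 < (2 / real n) * ramp (real n / 2) (real n) (X n \<omega>)" using that by (simp add: Z_def Xp1)
          then have "0 < ramp (real n / 2) (real n) (X n \<omega>)" using that by (simp add: zero_less_mult_iff zero_less_divide_iff)
          then have "real n / 2 < X n \<omega>" by (auto simp: ramp_def max_def min_def split: if_splits)
          then have "1/2 < X n \<omega> / real n" using that by (simp add: field_simps)
          then show ?thesis using abs_ge_self[of "X n \<omega> / real n"] by linarith
        qed
      qed (rule xn)
    next
      assume up: "\<not> (\<exists>B. \<forall>N. (\<Sum>n<N. prob {\<omega>\<in>space M. real (Suc n) < - X 1 \<omega>}) \<le> B)"
      define Z where "Z n = (\<lambda>\<omega>. 1 + (-1 * (2 / real n)) * ramp (- real n) (- real n / 2) (Xp n \<omega>))" for n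
      have Zm[measurable]: "\<And>n. Z n \<in> borel_measurable M" unfolding Z_def by measurable
      show False
      proof (rule conv_case[of Z "4 * C" X])
        show "\<And>n. Z n \<in> borel_measurable M" unfolding Z_def by measurable
        show "0 \<le> Z n \<omega> \<and> Z n \<omega> \<le> 1" for n \<omega>
        proof -
          have r: "0 \<le> ramp (- real n) (- real n / 2) x \<and> ramp (- real n) (- real n / 2) x \<le> real n / 2" for x
            using ramp_bounds[of "- real n" "- real n / 2" x] by simp
          show ?thesis
          proof (cases "n = 0")
            case True then show ?thesis by (simp add: Z_def)
          next
            case False
            have "(2 / real n) * ramp (- real n) (- real n / 2) (Xp n \<omega>) \<le> (2 / real n) * (real n / 2)"
              using r by (intro mult_left_mono) auto
            moreover have "0 \<le> (2 / real n) * ramp (- real n) (- real n / 2) (Xp n \<omega>)" using r by simp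
            ultimately show ?thesis using False by (simp add: Z_def)
          qed
        qed
        show "\<exists>N. B \<le> (\<Sum>n=1..N. expectation (Z n))" for B
        proof -
          obtain N where N: "B < (\<Sum>n<N. prob {\<omega>\<in>space M. real (Suc n) < - X 1 \<omega>})"
            using up by (meson not_le)
          have "(\<Sum>n<N. prob {\<omega>\<in>space M. real (Suc n) < - X 1 \<omega>}) \<le> (\<Sum>n<N. expectation (Z (Suc n)))"
          proof (rule sum_mono)
            fix n
            let ?m = "Suc n"
            have "prob {\<omega>\<in>space M. real ?m < - X 1 \<omega>} = prob {\<omega>\<in>space M. X 1 \<omega> \<in> {..< - real ?m}}"
              by (intro arg_cong[where f="measure M"]) auto
            also have "\<dots> = prob {\<omega>\<in>space M. Xp ?m \<omega> \<in> {..< - real ?m}}"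
              by (rule ident_prob[OF Xpm X1m _ Xpd, symmetric]) simp
            also have "\<dots> = prob {\<omega>\<in>space M. real ?m < - Xp ?m \<omega>}"
              by (intro arg_cong[where f="measure M"]) auto
            finally have "prob {\<omega>\<in>space M. real ?m < - X 1 \<omega>} = prob {\<omega>\<in>space M. real ?m < - Xp ?m \<omega>}" .
            also have "\<dots> = expectation (indicator {\<omega>\<in>space M. real ?m < - Xp ?m \<omega>})" by simp
            also have "\<dots> \<le> expectation (Z ?m)"
            proof (rule integral_mono)
              show "integrable M (indicator {\<omega>\<in>space M. real ?m < - Xp ?m \<omega>} :: 'a \<Rightarrow> real)"
                by (rule integrable_bounded_rv[where B=1]) (auto simp: indicator_def)
              show "integrable M (Z ?m)"
                by (rule integrable_bounded_rv[where B=1]) (use \<open>\<And>n \<omega>. 0 \<le> Z n \<omega> \<and> Z n \<omega> \<le> 1\<close> in \<open>auto simp: abs_le_iff\<close>)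
              fix \<omega> assume "\<omega> \<in> space M"
              show "indicator {\<omega>\<in>space M. real ?m < - Xp ?m \<omega>} \<omega> \<le> Z ?m \<omega>"
              proof (cases "real ?m < - Xp ?m \<omega>")
                case True
                then have "ramp (- real ?m) (- real ?m / 2) (Xp ?m \<omega>) = 0" by (simp add: ramp_def)
                then have "Z ?m \<omega> = 1" by (simp add: Z_def)
                then show ?thesis by (simp add: indicator_def)
              next
                case False
                then show ?thesis using \<open>\<And>n \<omega>. 0 \<le> Z n \<omega> \<and> Z n \<omega> \<le> 1\<close>[of ?m \<omega>] by (simp add: indicator_def)
              qed
            qed
            finally show "prob {\<omega>\<in>space M. real (Suc n) < - X 1 \<omega>} \<le> expectation (Z (Suc n))" .
          qed
          also have "\<dots> = (\<Sum>n=1..N. expectation (Z n))"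
            using sum.atLeast1_atMost_eq[of "\<lambda>n. expectation (Z n)" N] by simp
          finally show ?thesis using N by (intro exI[of _ N]) simp
        qed
        show "(\<Sum>p\<in>{p\<in>{1..N} \<times> {1..N}. fst p < snd p}. covar M (Z (fst p)) (Z (snd p))) \<le> 4 * C" for N
          by (rule cC_ramp[of X "-1" "\<lambda>n. - real n" "\<lambda>n. - real n / 2" Z 1 C]) (use Xm pqd gF' in \<open>auto simp: Z_def Xp1\<close>)
        show "1/2 < \<bar>X n \<omega> / real n\<bar>" if "1 \<le> n" "\<omega> \<in> space M" "0 < Z n \<omega>" for n \<omega>
        proof -
          have "(2 / real n) * ramp (- real n) (- real n / 2) (X n \<omega>) < 1" using that by (simp add: Z_def Xp1)
          then have "ramp (- real n) (- real n / 2) (X n \<omega>) < real n / 2" using that by (simp add: field_simps)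
          then have "X n \<omega> < - real n / 2" by (auto simp: ramp_def max_def min_def split: if_splits)
          then have "X n \<omega> / real n < - 1/2" using that by (simp add: field_simps)
          then show ?thesis using abs_ge_minus_self[of "X n \<omega> / real n"] by linarith
        qed
      qed (rule xn)
    qed
  qed
  show ?thesis using fwd bwd unfolding c_def by blast
qed

end
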